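(* Let $(\mathbf{w},\mathbf{u},q)$ be a sufficiently smooth solution of the GePUP-E formulation (described in the context) on $\Omega\times[t_0,\infty)$ with the initial condition $\mathbf{w}(\mathbf{x},t_0)=\mathbf{u}(\mathbf{x},t_0)$ for all $\mathbf{x}\in\overline{\Omega}$. Then the GePUP-E formulation recovers the incompressible Navier–Stokes equations for all $t\ge t_0$: namely $\mathbf{w}=\mathbf{u}$ for all $t\ge t_0$, and $(\mathbf{u},p)$ with $p=q$ satisfies $\partial_t\mathbf{u}+\mathbf{u}\cdot\nabla\mathbf{u}=\mathbf{g}-\nabla p+\nu\Delta\mathbf{u}$ in $\Omega$, $\nabla\cdot\mathbf{u}=0$ in $\Omega$, $\mathbf{u}=\mathbf{0}$ on $\partial\Omega$.
   Context: $\Omega\subset\mathbb{R}^D$ is a bounded connected open set with sufficiently smooth boundary, unit outward normal $\mathbf{n}$ and unit tangent vector(s) $\boldsymbol{\tau}$ on $\partial\Omega$. $\nu>0$ is the kinematic viscosity, $\mathbf{g}$ a given body force, $\lambda\ge 0$ a penalty parameter. The Leray–Helmholtz projection $\mathscr{P}$ maps a $C^1$ vector field $\mathbf{v}^*$ to $\mathbf{v}^*-\nabla\phi$ where $\Delta\phi=\nabla\cdot\mathbf{v}^*$ in $\Omega$ and $\mathbf{n}\cdot\nabla\phi=\mathbf{n}\cdot\mathbf{v}^*$ on $\partial\Omega$ (so $\mathscr{P}\mathbf{v}^*$ is divergence-free with zero normal component). The GePUP-E formulation is the system for $(\mathbf{w},\mathbf{u},q)$: $\partial_t\mathbf{w}=\mathbf{g}-\mathbf{u}\cdot\nabla\mathbf{u}-\nabla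 q+\nu\Delta\mathbf{w}$ in $\Omega$; $\mathbf{w}\cdot\boldsymbol{\tau}=0$ and $\nabla\cdot\mathbf{w}=0$ on $\partial\Omega$; $\mathbf{u}=\mathscr{P}\mathbf{w}$ in $\Omega$, $\mathbf{u}\cdot\mathbf{n}=0$ on $\partial\Omega$; $\Delta q=\nabla\cdot(\mathbf{g}-\mathbf{u}\cdot\nabla\mathbf{u})$ in $\Omega$; $\mathbf{n}\cdot\nabla q=\mathbf{n}\cdot(\mathbf{g}-\mathbf{u}\cdot\nabla\mathbf{u}+\nu\Delta\mathbf{w})+\lambda\,\mathbf{n}\cdot\mathbf{w}$ on $\partial\Omega$. *)

theory Defs
  imports "HOL-Analysis.Analysis"
begin

fun dds :: "'a::real_normed_vector list \<Rightarrow> ('a \<Rightarrow> 'b::real_normed_vector) \<Rightarrow> 'a \<Rightarrow> 'b" where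
  "dds [] f = f"
| "dds (v # vs) f = (\<lambda>x. frechet_derivative (dds vs f) (at x) v)"

definition Ck_on :: "nat \<Rightarrow> 'a::real_normed_vector set \<Rightarrow> ('a \<Rightarrow> 'b::real_normed_vector) \<Rightarrow> bool" where
  "Ck_on k S f \<longleftrightarrow>
     (\<forall>vs. length vs < k \<longrightarrow> dds vs f differentiable_on S) \<and>
     (\<forall>vs. length vs = k \<longrightarrow> continuous_on S (dds vs f))"

definition smooth_on :: "'a::real_normed_vector set \<Rightarrow> ('a \<Rightarrow> 'b::real_normed_vector) \<Rightarrow> bool" where
  "smooth_on S f \<longleftrightarrow> (\<forall>k. Ck_on k S f)"

definition grad :: "('a::euclidean_space \<Rightarrow> real) \<Rightarrow> 'a \<Rightarrow> 'a" where
  "grad f x = (\<Sum>b\<in>Basis. frechet_derivative f (at x) b *\<^sub>R b)"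

definition dvg :: "('a::euclidean_space \<Rightarrow> 'a) \<Rightarrow> 'a \<Rightarrow> real" where
  "dvg v x = (\<Sum>b\<in>Basis. frechet_derivative v (at x) b \<bullet> b)"

definition lap :: "('a::euclidean_space \<Rightarrow> 'b::real_normed_vector) \<Rightarrow> 'a \<Rightarrow> 'b" where
  "lap f x = (\<Sum>b\<in>Basis. frechet_derivative (\<lambda>y. frechet_derivative f (at y) b) (at x) b)"

definition advect :: "('a::euclidean_space \<Rightarrow> 'a) \<Rightarrow> ('a \<Rightarrow> 'b::real_normed_vector) \<Rightarrow> 'a \<Rightarrow> 'b" where
  "advect u v x = frechet_derivative v (at x) (u x)"

definition tderiv :: "('a \<Rightarrow> real \<Rightarrow> 'b::real_normed_vector) \<Rightarrow> 'a \<Rightarrow> real \<Rightarrow> 'b" where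
  "tderiv f x t = vector_derivative (\<lambda>s. f x s) (at t)"

text \<open>Bounded connected open domain with smooth boundary, given by a smooth
  defining function rho: Omega = {rho < 0}, grad rho nonzero on {rho = 0}.\<close>
definition smooth_domain :: "'a::euclidean_space set \<Rightarrow> ('a \<Rightarrow> real) \<Rightarrow> bool" where
  "smooth_domain \<Omega> \<rho> \<longleftrightarrow> bounded \<Omega> \<and> connected \<Omega> \<and> \<Omega> = {x. \<rho> x < 0} \<and>
     smooth_on UNIV \<rho> \<and> (\<forall>x. \<rho> x = 0 \<longrightarrow> grad \<rho> x \<noteq> 0)"

definition outward_normal :: "('a::euclidean_space \<Rightarrow> real) \<Rightarrow> 'a \<Rightarrow> 'a" where
  "outward_normal \<rho> x = (1 / norm (grad \<rho> x)) *\<^sub>R grad \<rho> x"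

definition leray_proj :: "'a::euclidean_space set \<Rightarrow> ('a \<Rightarrow> 'a) \<Rightarrow> ('a \<Rightarrow> 'a) \<Rightarrow> ('a \<Rightarrow> 'a) \<Rightarrow> bool" where
  "leray_proj \<Omega> n v P \<longleftrightarrow>
    (\<exists>\<phi> :: 'a \<Rightarrow> real. \<exists>V. open V \<and> closure \<Omega> \<subseteq> V \<and> Ck_on 2 V \<phi> \<and>
       (\<forall>x\<in>\<Omega>. lap \<phi> x = dvg v x) \<and>
       (\<forall>x\<in>frontier \<Omega>. n x \<bullet> grad \<phi> x = n x \<bullet> v x) \<and>
       (\<forall>x\<in>\<Omega>. P x = v x - grad \<phi> x))"

end

theory Submission
  imports Defs
begin


lemma fd_local:
  assumes "open S" "x \<in> S" "\<And>y. y \<in> S \<Longrightarrow> f y = g y"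
  shows "frechet_derivative f (at x) = frechet_derivative g (at x)"
proof -
  have "\<And>D. (f has_derivative D) (at x) \<longleftrightarrow> (g has_derivative D) (at x)"
    using has_derivative_transform_within_open[OF _ assms(1,2)] assms(3) by metis
  then show ?thesis unfolding frechet_derivative_def by simp
qed

lemma smooth_diff:
  assumes "smooth_on S F" "open S" "z \<in> S"
  shows "dds vs F differentiable (at z)"
proof -
  have "Ck_on (Suc (length vs)) S F" using assms(1) unfolding smooth_on_def by blast
  then have "dds vs F differentiable_on S" unfolding Ck_on_def by auto
  then show ?thesis using assms(2,3) differentiable_on_eq_differentiable_at by blast
qed

lemma smooth_cont:
  assumes "smooth_on S F"
  shows "continuous_on S (dds vs F)"
proof -
  have "Ck_on (length vs) S F" using assms(1) unfolding smooth_on_def by blast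
  then show ?thesis unfolding Ck_on_def by auto
qed

lemma fd_works: "f differentiable (at z) \<Longrightarrow> (f has_derivative frechet_derivative f (at z)) (at z)"
  using frechet_derivative_works by blast

lemma fd_linear: "f differentiable (at z) \<Longrightarrow> linear (frechet_derivative f (at z))"
  by (rule linear_frechet_derivative)

lemma slice_hd:
  assumes "F differentiable (at (x,t))"
  shows "((\<lambda>y. F (y,t)) has_derivative (\<lambda>v. frechet_derivative F (at (x,t)) (v,0))) (at x)"
proof -
  have 1: "((\<lambda>y. (y,t)) has_derivative (\<lambda>v. (v,0))) (at x)"
    by (auto intro!: derivative_eq_intros)
  show ?thesis
    using has_derivative_compose[OF 1, of F] fd_works[OF assms] by simp
qed

lemma slice_fd:
  assumes "F differentiable (at (x,t))"
  shows "frechet_derivative (\<lambda>y. F (y,t)) (at x) v = frechet_derivative F (at (x,t)) (v,0)"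
  by (simp add: frechet_derivative_at[OF slice_hd[OF assms], symmetric])

lemma slice_diff:
  assumes "F differentiable (at (x,t))"
  shows "(\<lambda>y. F (y,t)) differentiable (at x)"
  using slice_hd[OF assms] differentiable_def by blast

lemma tslice:
  assumes "F differentiable (at (x,t))"
  shows "((\<lambda>s. F (x,s)) has_vector_derivative frechet_derivative F (at (x,t)) (0,1)) (at t)"
proof -
  have 1: "((\<lambda>s. (x,s)) has_derivative (\<lambda>r. (0,r))) (at t)"
    by (auto intro!: derivative_eq_intros)
  have 2: "((\<lambda>s. F (x,s)) has_derivative (\<lambda>r. frechet_derivative F (at (x,t)) (0,r))) (at t)"
    using has_derivative_compose[OF 1, of F] fd_works[OF assms] by simp
  have eq: "(\<lambda>r. frechet_derivative F (at (x,t)) (0,r)) = (\<lambda>r. r *\<^sub>R frechet_derivative F (at (x,t)) (0,1))"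
  proof
    fix r :: real
    have "frechet_derivative F (at (x,t)) (r *\<^sub>R (0,1)) = r *\<^sub>R frechet_derivative F (at (x,t)) (0,1)"
      by (rule linear_scale[OF fd_linear[OF assms]])
    then show "frechet_derivative F (at (x,t)) (0,r) = r *\<^sub>R frechet_derivative F (at (x,t)) (0,1)" by simp
  qed
  show ?thesis unfolding has_vector_derivative_def using 2 by (simp only: eq)
qed

lemma line_deriv:
  fixes F :: "'v::real_normed_vector \<Rightarrow> 'w::real_normed_vector"
  assumes "F differentiable (at (z + s *\<^sub>R v))"
  shows "((\<lambda>s. F (z + s *\<^sub>R v)) has_vector_derivative frechet_derivative F (at (z + s *\<^sub>R v)) v) (at s)"
proof -
  have 1: "((\<lambda>s. z + s *\<^sub>R v) has_derivative (\<lambda>r. r *\<^sub>R v)) (at s)"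
    by (auto intro!: derivative_eq_intros)
  have 2: "((\<lambda>s. F (z + s *\<^sub>R v)) has_derivative (\<lambda>r. frechet_derivative F (at (z + s *\<^sub>R v)) (r *\<^sub>R v))) (at s)"
    using has_derivative_compose[OF 1, of F] fd_works[OF assms] by simp
  show ?thesis using 2 linear_scale[OF fd_linear[OF assms]] unfolding has_vector_derivative_def by simp
qed

lemma line_deriv_real:
  fixes F :: "'v::real_normed_vector \<Rightarrow> real"
  assumes "F differentiable (at (z + s *\<^sub>R v))"
  shows "((\<lambda>s. F (z + s *\<^sub>R v)) has_real_derivative frechet_derivative F (at (z + s *\<^sub>R v)) v) (at s)"
  using line_deriv[OF assms] has_real_derivative_iff_has_vector_derivative by blast

lemma fd_inner:
  assumes "F differentiable (at z)"
  shows "frechet_derivative (\<lambda>y. F y \<bullet> c) (at z) v = frechet_derivative F (at z) v \<bullet> c"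
proof -
  have "((\<lambda>y. F y \<bullet> c) has_derivative (\<lambda>v. frechet_derivative F (at z) v \<bullet> c)) (at z)"
    using fd_works[OF assms] by (auto intro!: derivative_eq_intros)
  then show ?thesis by (simp add: frechet_derivative_at[symmetric])
qed



lemma mvt_square:
  fixes f :: "'v::real_normed_vector \<Rightarrow> real"
  assumes h: "h > 0"
    and S: "\<And>s \<tau>. 0 \<le> s \<Longrightarrow> s \<le> h \<Longrightarrow> 0 \<le> \<tau> \<Longrightarrow> \<tau> \<le> h \<Longrightarrow> x + s *\<^sub>R a + \<tau> *\<^sub>R b \<in> S"
    and df: "\<And>y. y \<in> S \<Longrightarrow> f differentiable (at y)"
    and da: "\<And>y. y \<in> S \<Longrightarrow> (\<lambda>y. frechet_derivative f (at y) a) differentiable (at y)"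
  shows "\<exists>s \<tau>. 0 < s \<and> s < h \<and> 0 < \<tau> \<and> \<tau> < h \<and>
    f (x + h *\<^sub>R a + h *\<^sub>R b) - f (x + h *\<^sub>R a) - f (x + h *\<^sub>R b) + f x =
    h * h * frechet_derivative (\<lambda>y. frechet_derivative f (at y) a) (at (x + s *\<^sub>R a + \<tau> *\<^sub>R b)) b"
proof -
  define g where "g s = f ((x + h *\<^sub>R b) + s *\<^sub>R a) - f (x + s *\<^sub>R a)" for s
  have g': "DERIV g s :> (frechet_derivative f (at ((x + h *\<^sub>R b) + s *\<^sub>R a)) a
        - frechet_derivative f (at (x + s *\<^sub>R a)) a)" if "0 \<le> s" "s \<le> h" for s
  proof -
    have m1: "(x + h *\<^sub>R b) + s *\<^sub>R a \<in> S"
      using S[of s h] that h by (simp add: algebra_simps)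
    have m2: "x + s *\<^sub>R a \<in> S"
      using S[of s 0] that h by simp
    show ?thesis unfolding g_def
      by (intro DERIV_diff line_deriv_real df m1 m2)
  qed
  obtain s1 where s1: "0 < s1" "s1 < h"
    and e1: "g h - g 0 = (h - 0) * (frechet_derivative f (at ((x + h *\<^sub>R b) + s1 *\<^sub>R a)) a
        - frechet_derivative f (at (x + s1 *\<^sub>R a)) a)"
    using MVT2[OF h g'] by auto
  define k where "k \<tau> = frechet_derivative f (at ((x + s1 *\<^sub>R a) + \<tau> *\<^sub>R b)) a" for \<tau>
  have k': "DERIV k \<tau> :> frechet_derivative (\<lambda>y. frechet_derivative f (at y) a) (at ((x + s1 *\<^sub>R a) + \<tau> *\<^sub>R b)) b"
    if "0 \<le> \<tau>" "\<tau> \<le> h" for \<tau>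
  proof -
    have m: "(x + s1 *\<^sub>R a) + \<tau> *\<^sub>R b \<in> S"
      using S[of s1 \<tau>] that s1 by simp
    show ?thesis unfolding k_def
      using line_deriv_real[of "\<lambda>y. frechet_derivative f (at y) a" "x + s1 *\<^sub>R a" \<tau> b] da[OF m] by simp
  qed
  obtain \<tau>1 where t1: "0 < \<tau>1" "\<tau>1 < h"
    and e2: "k h - k 0 = (h - 0) * frechet_derivative (\<lambda>y. frechet_derivative f (at y) a) (at ((x + s1 *\<^sub>R a) + \<tau>1 *\<^sub>R b)) b"
    using MVT2[OF h k'] by auto
  have "k h = frechet_derivative f (at ((x + h *\<^sub>R b) + s1 *\<^sub>R a)) a"
    unfolding k_def by (simp add: algebra_simps)
  moreover have "k 0 = frechet_derivative f (at (x + s1 *\<^sub>R a)) a"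
    unfolding k_def by simp
  ultimately have "g h - g 0 = h * (h * frechet_derivative (\<lambda>y. frechet_derivative f (at y) a) (at ((x + s1 *\<^sub>R a) + \<tau>1 *\<^sub>R b)) b)"
    using e1 e2 by simp
  moreover have "g h - g 0 = f (x + h *\<^sub>R a + h *\<^sub>R b) - f (x + h *\<^sub>R a) - f (x + h *\<^sub>R b) + f x"
    unfolding g_def by (simp add: algebra_simps)
  ultimately show ?thesis using s1 t1
    by (intro exI[of _ s1] exI[of _ \<tau>1]) simp
qed

lemma schwarz:
  fixes f :: "'v::real_normed_vector \<Rightarrow> real"
  assumes S: "open S" "x \<in> S"
    and df: "\<And>y. y \<in> S \<Longrightarrow> f differentiable (at y)"
    and da: "\<And>y. y \<in> S \<Longrightarrow> (\<lambda>y. frechet_derivative f (at y) a) differentiable (at y)"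
    and db: "\<And>y. y \<in> S \<Longrightarrow> (\<lambda>y. frechet_derivative f (at y) b) differentiable (at y)"
    and ca: "continuous_on S (\<lambda>y. frechet_derivative (\<lambda>y. frechet_derivative f (at y) a) (at y) b)"
    and cb: "continuous_on S (\<lambda>y. frechet_derivative (\<lambda>y. frechet_derivative f (at y) b) (at y) a)"
  shows "frechet_derivative (\<lambda>y. frechet_derivative f (at y) a) (at x) b =
         frechet_derivative (\<lambda>y. frechet_derivative f (at y) b) (at x) a"
proof (rule ccontr)
  define A where "A y = frechet_derivative (\<lambda>y. frechet_derivative f (at y) a) (at y) b" for y
  define B where "B y = frechet_derivative (\<lambda>y. frechet_derivative f (at y) b) (at y) a" for y
  assume "\<not> ?thesis"
  then have ne: "A x \<noteq> B x" unfolding A_def B_def .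
  define e where "e = \<bar>A x - B x\<bar> / 2"
  have e: "e > 0" using ne unfolding e_def by simp
  have cA: "continuous (at x) A" using ca S unfolding A_def by (simp add: continuous_on_eq_continuous_at)
  have cB: "continuous (at x) B" using cb S unfolding B_def by (simp add: continuous_on_eq_continuous_at)
  obtain d1 where d1: "d1 > 0" "\<And>y. dist y x < d1 \<Longrightarrow> dist (A y) (A x) < e"
    using cA e unfolding continuous_at_eps_delta by blast
  obtain d2 where d2: "d2 > 0" "\<And>y. dist y x < d2 \<Longrightarrow> dist (B y) (B x) < e"
    using cB e unfolding continuous_at_eps_delta by blast
  obtain d3 where d3: "d3 > 0" "ball x d3 \<subseteq> S"
    using S openE by blast
  define d where "d = min d1 (min d2 d3)"
  have d: "d > 0" using d1 d2 d3 unfolding d_def by simp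
  define h where "h = d / (2 * (norm a + norm b + 1))"
  have p: "0 < 2 * (norm a + norm b + 1)" by (smt (verit) norm_ge_zero)
  have h: "h > 0" unfolding h_def using d p by simp
  have small: "dist (x + s *\<^sub>R a + \<tau> *\<^sub>R b) x < d" if "0 \<le> s" "s \<le> h" "0 \<le> \<tau>" "\<tau> \<le> h" for s \<tau>
  proof -
    have "dist (x + s *\<^sub>R a + \<tau> *\<^sub>R b) x = norm (s *\<^sub>R a + \<tau> *\<^sub>R b)"
      by (simp add: dist_norm)
    also have "\<dots> \<le> s * norm a + \<tau> * norm b"
      using that norm_triangle_ineq[of "s *\<^sub>R a" "\<tau> *\<^sub>R b"] by simp
    also have "\<dots> \<le> h * norm a + h * norm b"
      using that by (intro add_mono mult_right_mono) auto
    also have "\<dots> < h * (2 * (norm a + norm b + 1))"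
    proof -
      have "h * (2 * (norm a + norm b + 1)) = (h * norm a + h * norm b) + h * (norm a + norm b) + 2 * h"
        by (simp add: algebra_simps)
      moreover have "0 \<le> h * (norm a + norm b)" using h by simp
      ultimately show ?thesis using h by linarith
    qed
    also have "\<dots> = d" unfolding h_def using p by simp
    finally show ?thesis .
  qed
  have inS: "x + s *\<^sub>R a + \<tau> *\<^sub>R b \<in> S" if "0 \<le> s" "s \<le> h" "0 \<le> \<tau>" "\<tau> \<le> h" for s \<tau>
    using small[OF that] d3(2) unfolding d_def by (auto simp: dist_commute)
  have inS': "x + s *\<^sub>R b + \<tau> *\<^sub>R a \<in> S" if "0 \<le> s" "s \<le> h" "0 \<le> \<tau>" "\<tau> \<le> h" for s \<tau>
    using inS[OF that(3,4,1,2)] by (simp add: algebra_simps)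
  obtain s1 t1 where st1: "0 < s1" "s1 < h" "0 < t1" "t1 < h"
    and E1: "f (x + h *\<^sub>R a + h *\<^sub>R b) - f (x + h *\<^sub>R a) - f (x + h *\<^sub>R b) + f x = h * h * A (x + s1 *\<^sub>R a + t1 *\<^sub>R b)"
    using mvt_square[OF h inS df da] unfolding A_def by blast
  obtain s2 t2 where st2: "0 < s2" "s2 < h" "0 < t2" "t2 < h"
    and E2: "f (x + h *\<^sub>R b + h *\<^sub>R a) - f (x + h *\<^sub>R b) - f (x + h *\<^sub>R a) + f x = h * h * B (x + s2 *\<^sub>R b + t2 *\<^sub>R a)"
    using mvt_square[OF h inS' df db] unfolding B_def by blast
  have eqn: "x + h *\<^sub>R b + h *\<^sub>R a = x + h *\<^sub>R a + h *\<^sub>R b" by (simp add: algebra_simps)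
  from E2 have E2': "f (x + h *\<^sub>R a + h *\<^sub>R b) - f (x + h *\<^sub>R b) - f (x + h *\<^sub>R a) + f x = h * h * B (x + s2 *\<^sub>R b + t2 *\<^sub>R a)"
    by (simp only: eqn)
  have "h * h * A (x + s1 *\<^sub>R a + t1 *\<^sub>R b) = h * h * B (x + s2 *\<^sub>R b + t2 *\<^sub>R a)"
    using E1 E2' by linarith
  then have AB: "A (x + s1 *\<^sub>R a + t1 *\<^sub>R b) = B (x + s2 *\<^sub>R b + t2 *\<^sub>R a)" using h by simp
  have "dist (A (x + s1 *\<^sub>R a + t1 *\<^sub>R b)) (A x) < e"
    using d1(2) small[of s1 t1] st1 unfolding d_def by auto
  moreover have "dist (B (x + s2 *\<^sub>R b + t2 *\<^sub>R a)) (B x) < e"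
  proof -
    have "dist (x + t2 *\<^sub>R a + s2 *\<^sub>R b) x < d" using small[of t2 s2] st2 by auto
    then have "dist (x + s2 *\<^sub>R b + t2 *\<^sub>R a) x < d2" unfolding d_def by (simp add: algebra_simps)
    then show ?thesis using d2(2) by blast
  qed
  ultimately have "\<bar>A x - B x\<bar> < 2 * e" using AB unfolding dist_real_def by linarith
  then show False unfolding e_def by simp
qed



lemma second_deriv_max:
  fixes f f' :: "real \<Rightarrow> real"
  assumes d: "\<delta> > 0" and f': "\<And>s. \<bar>s\<bar> < \<delta> \<Longrightarrow> DERIV f s :> f' s"
    and f'': "DERIV f' 0 :> L" and mx: "\<And>s. \<bar>s\<bar> < \<delta> \<Longrightarrow> f s \<le> f 0"
  shows "L \<le> 0"
proof (rule ccontr)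
  assume "\<not> L \<le> 0" then have L: "L > 0" by simp
  have z: "f' 0 = 0"
    by (rule DERIV_local_max[OF f'[of 0] d]) (use d mx in auto)
  obtain d1 where d1: "d1 > 0" "\<And>h. h > 0 \<Longrightarrow> h < d1 \<Longrightarrow> f' 0 < f' (0 + h)"
    using DERIV_pos_inc_right[OF f'' L] by blast
  define s where "s = min d1 \<delta> / 2"
  have s: "0 < s" "s < d1" "s < \<delta>" using d1 d unfolding s_def by auto
  obtain z where z1: "0 < z" "z < s" "f s - f 0 = (s - 0) * f' z"
    using MVT2[OF s(1), of f f'] f' s by (auto simp: abs_le_iff)
  have "f' z > 0" using d1(2)[of z] z1 s z by simp
  then have "s * f' z > 0" using z1 s by simp
  then have "f s > f 0" using z1 by simp
  moreover have "f s \<le> f 0" using mx[of s] s by simp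
  ultimately show False by simp
qed

lemma right_max_deriv:
  fixes g :: "real \<Rightarrow> real"
  assumes "DERIV g 0 :> L" "\<delta> > 0" "\<And>h. 0 < h \<Longrightarrow> h < \<delta> \<Longrightarrow> g h \<le> g 0"
  shows "L \<le> 0"
proof (rule ccontr)
  assume "\<not> L \<le> 0" then have L: "L > 0" by simp
  obtain d1 where d1: "d1 > 0" "\<And>h. h > 0 \<Longrightarrow> h < d1 \<Longrightarrow> g 0 < g (0 + h)"
    using DERIV_pos_inc_right[OF assms(1) L] by blast
  define s where "s = min d1 \<delta> / 2"
  have s: "0 < s" "s < d1" "s < \<delta>" using d1 assms(2) unfolding s_def by auto
  show False using d1(2)[of s] assms(3)[of s] s by simp
qed

lemma left_max_deriv:
  fixes g :: "real \<Rightarrow> real"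
  assumes "DERIV g 0 :> L" "\<delta> > 0" "\<And>h. 0 < h \<Longrightarrow> h < \<delta> \<Longrightarrow> g (- h) \<le> g 0"
  shows "L \<ge> 0"
proof (rule ccontr)
  assume "\<not> L \<ge> 0" then have L: "L < 0" by simp
  obtain d1 where d1: "d1 > 0" "\<And>h. h > 0 \<Longrightarrow> h < d1 \<Longrightarrow> g 0 < g (0 - h)"
    using DERIV_neg_dec_left[OF assms(1) L] by blast
  define s where "s = min d1 \<delta> / 2"
  have s: "0 < s" "s < d1" "s < \<delta>" using d1 assms(2) unfolding s_def by auto
  show False using d1(2)[of s] assms(3)[of s] s by simp
qed

lemma grad_inner:
  fixes f :: "'a::euclidean_space \<Rightarrow> real"
  assumes "f differentiable (at x)"
  shows "frechet_derivative f (at x) v = grad f x \<bullet> v"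
proof -
  have lin: "linear (frechet_derivative f (at x))" using fd_linear[OF assms] .
  have "frechet_derivative f (at x) v = frechet_derivative f (at x) (\<Sum>b\<in>Basis. (v \<bullet> b) *\<^sub>R b)"
    by (simp add: euclidean_representation)
  also have "\<dots> = (\<Sum>b\<in>Basis. (v \<bullet> b) * frechet_derivative f (at x) b)"
    using linear_sum[OF lin, of "\<lambda>b. (v \<bullet> b) *\<^sub>R b" Basis] linear_scale[OF lin] by (simp del: euclidean_representation)
  also have "\<dots> = grad f x \<bullet> v"
    unfolding grad_def by (simp add: inner_sum_left inner_sum_right mult.commute inner_commute)
  finally show ?thesis .
qed

lemma norm_grad_sq:
  fixes f :: "'a::euclidean_space \<Rightarrow> real"
  assumes "f differentiable (at x)"
  shows "(\<Sum>c\<in>Basis. (frechet_derivative f (at x) c)\<^sup>2) = (norm (grad f x))\<^sup>2"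
proof -
  have "(norm (grad f x))\<^sup>2 = grad f x \<bullet> grad f x" by (simp add: power2_norm_eq_inner)
  also have "\<dots> = (\<Sum>c\<in>Basis. (grad f x \<bullet> c) * (grad f x \<bullet> c))" by (rule euclidean_inner)
  also have "\<dots> = (\<Sum>c\<in>Basis. (frechet_derivative f (at x) c)\<^sup>2)"
    using grad_inner[OF assms] by (simp add: power2_eq_square)
  finally show ?thesis by simp
qed

lemma norm_line_sq:
  "(norm (p + s *\<^sub>R c))\<^sup>2 = (norm p)\<^sup>2 + 2 * s * (p \<bullet> c) + s\<^sup>2 * (norm c)\<^sup>2"
  unfolding power2_norm_eq_inner by (simp add: inner_add_left inner_add_right inner_commute algebra_simps power2_eq_square)

lemma DERIV_quad:
  "DERIV (\<lambda>s. (norm p)\<^sup>2 + 2 * s * (p \<bullet> c) + s\<^sup>2 * (norm c)\<^sup>2) s :> 2 * (p \<bullet> c) + 2 * s * (norm c)\<^sup>2"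
  by (auto intro!: derivative_eq_intros)



lemma C2_facts:
  assumes "Ck_on 2 V f" "open V"
  shows C2_d0: "\<And>y. y \<in> V \<Longrightarrow> f differentiable (at y)"
    and C2_d1: "\<And>y c. y \<in> V \<Longrightarrow> (\<lambda>y. frechet_derivative f (at y) c) differentiable (at y)"
    and C2_c2: "\<And>c d. continuous_on V (\<lambda>y. frechet_derivative (\<lambda>y. frechet_derivative f (at y) c) (at y) d)"
    and C2_c0: "continuous_on V f"
    and C2_c1: "\<And>c. continuous_on V (\<lambda>y. frechet_derivative f (at y) c)"
proof -
  have A: "\<And>vs. length vs < 2 \<Longrightarrow> dds vs f differentiable_on V"
    and B: "\<And>vs. length vs = 2 \<Longrightarrow> continuous_on V (dds vs f)"
    using assms(1) unfolding Ck_on_def by auto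
  have a0: "f differentiable_on V" using A[of "[]"] by simp
  have a1: "(\<lambda>y. frechet_derivative f (at y) c) differentiable_on V" for c using A[of "[c]"] by simp
  show "\<And>y. y \<in> V \<Longrightarrow> f differentiable (at y)"
    using a0 assms(2) differentiable_on_eq_differentiable_at by blast
  show "\<And>y c. y \<in> V \<Longrightarrow> (\<lambda>y. frechet_derivative f (at y) c) differentiable (at y)"
    using a1 assms(2) differentiable_on_eq_differentiable_at by blast
  show "\<And>c d. continuous_on V (\<lambda>y. frechet_derivative (\<lambda>y. frechet_derivative f (at y) c) (at y) d)"
  proof -
    fix c d
    show "continuous_on V (\<lambda>y. frechet_derivative (\<lambda>y. frechet_derivative f (at y) c) (at y) d)"
      using B[of "[d,c]"] by simp
  qed
  show "continuous_on V f" using a0 differentiable_imp_continuous_on by blast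
  show "\<And>c. continuous_on V (\<lambda>y. frechet_derivative f (at y) c)"
    using a1 differentiable_imp_continuous_on by blast
qed

lemma hopf:
  fixes \<phi> \<rho> :: "'a::euclidean_space \<Rightarrow> real"
  assumes V: "open V" "cball x0 r0 \<subseteq> V" "r0 > 0"
    and c\<phi>: "Ck_on 2 V \<phi>" and c\<rho>: "Ck_on 2 V \<rho>"
    and \<rho>0: "\<rho> x0 = 0" and g0: "grad \<rho> x0 \<noteq> 0" and \<beta>: "\<beta> > 0"
    and M: "\<phi> x0 = M"
    and le: "\<And>x. x \<in> cball x0 r0 \<Longrightarrow> \<rho> x + \<beta> * (norm (x - x0))\<^sup>2 \<le> 0 \<Longrightarrow> \<phi> x \<le> M"
    and lt: "\<And>x. x \<in> cball x0 r0 \<Longrightarrow> x \<noteq> x0 \<Longrightarrow> \<rho> x + \<beta> * (norm (x - x0))\<^sup>2 \<le> 0 \<Longrightarrow> \<phi> x < M"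
    and lp: "\<And>x. x \<in> ball x0 r0 \<Longrightarrow> \<rho> x + \<beta> * (norm (x - x0))\<^sup>2 < 0 \<Longrightarrow> lap \<phi> x \<ge> 0"
  shows "frechet_derivative \<phi> (at x0) (grad \<rho> x0) > 0"
proof -
  note d\<phi> = C2_d0[OF c\<phi> V(1)] and d\<phi>1 = C2_d1[OF c\<phi> V(1)]
  note d\<rho> = C2_d0[OF c\<rho> V(1)] and d\<rho>1 = C2_d1[OF c\<rho> V(1)]
  note c\<rho>2 = C2_c2[OF c\<rho> V(1)] and c\<rho>0 = C2_c0[OF c\<rho> V(1)] and c\<rho>1 = C2_c1[OF c\<rho> V(1)]
  note c\<phi>0 = C2_c0[OF c\<phi> V(1)]
  have x0V: "x0 \<in> V" using V by auto
  define G where "G = grad \<rho> x0"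
  have G: "G \<noteq> 0" using g0 unfolding G_def .
  define \<sigma> where "\<sigma> y = \<rho> y + \<beta> * (norm (y - x0))\<^sup>2" for y
  have cont\<sigma>: "continuous_on V \<sigma>"
    unfolding \<sigma>_def by (intro continuous_intros c\<rho>0)
  define Q where "Q y = (\<Sum>c\<in>Basis. (frechet_derivative \<rho> (at y) c + \<beta> * (2 * ((y - x0) \<bullet> c)))\<^sup>2)" for y
  have contQ: "continuous_on V Q"
    unfolding Q_def by (intro continuous_intros c\<rho>1)
  have Q0: "Q x0 = (norm G)\<^sup>2"
    unfolding Q_def G_def using norm_grad_sq[OF d\<rho>[OF x0V]] by simp
  define m where "m = (norm G)\<^sup>2 / 2"
  have m: "m > 0" unfolding m_def using G by simp
  have "continuous (at x0) Q" using contQ V(1) x0V continuous_on_eq_continuous_at by blast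
  then obtain r1 where r1: "r1 > 0" "\<And>y. dist y x0 < r1 \<Longrightarrow> dist (Q y) (Q x0) < m"
    using m unfolding continuous_at_eps_delta by blast
  define r where "r = min (r0 / 2) (r1 / 2)"
  have r: "r > 0" "r < r0" "r < r1" using r1 V(3) unfolding r_def by auto
  have "cball x0 r \<subseteq> cball x0 r0" using r by (intro subset_cball) simp
  then have cbr: "cball x0 r \<subseteq> V" using V(2) by blast
  have Qm: "Q y \<ge> m" if "y \<in> cball x0 r" for y
  proof -
    have "dist y x0 < r1" using that r by (auto simp: dist_commute)
    then have "dist (Q y) (Q x0) < m" using r1 by blast
    then show ?thesis using Q0 unfolding m_def dist_real_def by linarith
  qed
  define L\<rho> where "L\<rho> y = (\<Sum>c\<in>Basis. frechet_derivative (\<lambda>y. frechet_derivative \<rho> (at y) c) (at y) c)" for y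
  have contL: "continuous_on (cball x0 r) L\<rho>"
    unfolding L\<rho>_def by (intro continuous_intros continuous_on_subset[OF c\<rho>2 cbr])
  obtain Lb where Lb: "Lb > 0" "\<And>y. y \<in> cball x0 r \<Longrightarrow> norm (L\<rho> y) \<le> Lb"
    using compact_imp_bounded[OF compact_continuous_image[OF contL compact_cball]]
    unfolding bounded_pos by auto
  define \<alpha> where "\<alpha> = (Lb + 2 * \<beta> * DIM('a) + 1) / m"
  have "0 \<le> 2 * \<beta> * real DIM('a)" using \<beta> by simp
  then have "Lb + 2 * \<beta> * DIM('a) + 1 > 0" using Lb by linarith
  then have \<alpha>: "\<alpha> > 0" unfolding \<alpha>_def using m by simp
  have key: "\<alpha> * Q y - (L\<rho> y + 2 * \<beta> * DIM('a)) > 0" if "y \<in> cball x0 r" for y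
  proof -
    have "\<alpha> * Q y \<ge> \<alpha> * m" using Qm[OF that] \<alpha> by simp
    also have "\<alpha> * m = Lb + 2 * \<beta> * DIM('a) + 1" unfolding \<alpha>_def using m by simp
    finally show ?thesis using Lb(2)[OF that] by simp
  qed
  define h where "h y = exp (- \<alpha> * \<sigma> y) - 1" for y
  define K where "K = cball x0 r \<inter> \<sigma> -` {..0}"
  have closedK: "closed K" unfolding K_def
    by (rule continuous_closed_preimage[OF continuous_on_subset[OF cont\<sigma> cbr]]) auto
  have compK: "compact K"
    using closedK unfolding compact_eq_bounded_closed K_def
    by (meson bounded_cball bounded_subset inf_le1)
  have KV: "K \<subseteq> V" using cbr unfolding K_def by auto
  have x0K: "x0 \<in> K" unfolding K_def \<sigma>_def using \<rho>0 r by simp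
  define Ks where "Ks = K \<inter> sphere x0 r"
  have compKs: "compact Ks" unfolding Ks_def using compK by (simp add: compact_Int_closed)
  obtain \<eta> where \<eta>: "\<eta> > 0" "\<And>y. y \<in> Ks \<Longrightarrow> \<phi> y \<le> M - \<eta>"
  proof (cases "Ks = {}")
    case True then show ?thesis using that[of 1] by auto
  next
    case False
    have "continuous_on Ks \<phi>"
      using continuous_on_subset[OF c\<phi>0, of Ks] KV unfolding Ks_def by blast
    then obtain ym where ym: "ym \<in> Ks" "\<And>y. y \<in> Ks \<Longrightarrow> \<phi> y \<le> \<phi> ym"
      using continuous_attains_sup[OF compKs False] by blast
    have "\<phi> ym < M"
    proof (rule lt)
      show "ym \<in> cball x0 r0" using ym(1) r unfolding Ks_def K_def by auto
      show "ym \<noteq> x0" using ym(1) r unfolding Ks_def by auto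
      show "\<rho> ym + \<beta> * (norm (ym - x0))\<^sup>2 \<le> 0" using ym(1) unfolding Ks_def K_def \<sigma>_def by auto
    qed
    then show ?thesis using that[of "M - \<phi> ym"] ym by auto
  qed
  have conth: "continuous_on K h"
    unfolding h_def by (intro continuous_intros continuous_on_subset[OF cont\<sigma> KV])
  obtain C where C: "C > 0" "\<And>y. y \<in> K \<Longrightarrow> norm (h y) \<le> C"
    using compact_imp_bounded[OF compact_continuous_image[OF conth compK]]
    unfolding bounded_pos by auto
  define \<epsilon> where "\<epsilon> = \<eta> / (2 * C)"
  have \<epsilon>: "\<epsilon> > 0" unfolding \<epsilon>_def using \<eta> C by simp
  define v where "v y = \<phi> y + \<epsilon> * h y" for y
  have contv: "continuous_on K v"
    unfolding v_def by (intro continuous_intros conth continuous_on_subset[OF c\<phi>0 KV])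
  obtain xm where xm: "xm \<in> K" "\<And>y. y \<in> K \<Longrightarrow> v y \<le> v xm"
    using continuous_attains_sup[OF compK _ contv] x0K by blast
  have vM: "v xm \<le> M"
  proof (cases "\<sigma> xm < 0 \<and> dist x0 xm < r")
    case True
    have \<sigma>xm: "\<sigma> xm < 0" and dxm: "dist x0 xm < r" using True by auto
    have ballV: "ball x0 r \<subseteq> V" using cbr by auto
    define Op where "Op = ball x0 r \<inter> \<sigma> -` {..<0}"
    have openO: "open Op" unfolding Op_def
      by (rule continuous_open_preimage[OF continuous_on_subset[OF cont\<sigma> ballV] open_ball open_lessThan])
    have xmO: "xm \<in> Op" using True unfolding Op_def by auto
    have OK: "Op \<subseteq> K" unfolding Op_def K_def by auto
    obtain \<delta> where \<delta>: "\<delta> > 0" "ball xm \<delta> \<subseteq> Op" using openO xmO openE by blast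
    have xmV: "xm \<in> V" using xm(1) KV by auto
    have each: "frechet_derivative (\<lambda>y. frechet_derivative \<phi> (at y) c) (at xm) c
        + \<epsilon> * exp (- \<alpha> * \<sigma> xm) * (\<alpha>\<^sup>2 * (frechet_derivative \<rho> (at xm) c + \<beta> * (2 * ((xm - x0) \<bullet> c)))\<^sup>2
            - \<alpha> * (frechet_derivative (\<lambda>y. frechet_derivative \<rho> (at y) c) (at xm) c + 2 * \<beta>)) \<le> 0"
      if c: "c \<in> Basis" for c
    proof -
      have nc: "norm c = 1" using c by simp
      have lineO: "xm + s *\<^sub>R c \<in> Op" if "\<bar>s\<bar> < \<delta>" for s
        using \<delta>(2) that nc by (auto simp: dist_norm)
      have lineV: "xm + s *\<^sub>R c \<in> V" if "\<bar>s\<bar> < \<delta>" for s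
        using lineO[OF that] OK KV by auto
      define P where "P s = \<rho> (xm + s *\<^sub>R c) + \<beta> * ((norm (xm - x0))\<^sup>2 + 2 * s * ((xm - x0) \<bullet> c) + s\<^sup>2 * (norm c)\<^sup>2)" for s
      define P' where "P' s = frechet_derivative \<rho> (at (xm + s *\<^sub>R c)) c + \<beta> * (2 * ((xm - x0) \<bullet> c) + 2 * s * (norm c)\<^sup>2)" for s
      have \<sigma>P: "\<sigma> (xm + s *\<^sub>R c) = P s" for s
      proof -
        have eqn: "xm + s *\<^sub>R c - x0 = (xm - x0) + s *\<^sub>R c" by (simp add: algebra_simps)
        show ?thesis unfolding \<sigma>_def P_def by (simp only: eqn norm_line_sq)
      qed
      have dP: "DERIV P s :> P' s" if "\<bar>s\<bar> < \<delta>" for s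
        unfolding P_def P'_def
        by (intro DERIV_add DERIV_cmult line_deriv_real d\<rho> lineV that DERIV_quad)
      have dP'0: "DERIV P' 0 :> frechet_derivative (\<lambda>y. frechet_derivative \<rho> (at y) c) (at xm) c + \<beta> * (2 * (norm c)\<^sup>2)"
      proof -
        have 1: "DERIV (\<lambda>s. frechet_derivative \<rho> (at (xm + s *\<^sub>R c)) c) 0 :> frechet_derivative (\<lambda>y. frechet_derivative \<rho> (at y) c) (at xm) c"
          using line_deriv_real[of "\<lambda>y. frechet_derivative \<rho> (at y) c" xm 0 c] d\<rho>1[OF xmV] by simp
        have 2: "DERIV (\<lambda>s. \<beta> * (2 * ((xm - x0) \<bullet> c) + 2 * s * (norm c)\<^sup>2)) 0 :> \<beta> * (2 * (norm c)\<^sup>2)"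
          by (auto intro!: derivative_eq_intros)
        show ?thesis unfolding P'_def using DERIV_add[OF 1 2] by simp
      qed
      define f where "f s = \<phi> (xm + s *\<^sub>R c) + \<epsilon> * (exp (- \<alpha> * P s) - 1)" for s
      define f' where "f' s = frechet_derivative \<phi> (at (xm + s *\<^sub>R c)) c + \<epsilon> * (exp (- \<alpha> * P s) * (- \<alpha> * P' s))" for s
      have fv: "f s = v (xm + s *\<^sub>R c)" for s unfolding f_def v_def h_def \<sigma>P by simp
      have df: "DERIV f s :> f' s" if "\<bar>s\<bar> < \<delta>" for s
      proof -
        have e: "DERIV (\<lambda>s. exp (- \<alpha> * P s)) s :> exp (- \<alpha> * P s) * (- \<alpha> * P' s)"
          by (rule DERIV_fun_exp) (rule DERIV_cmult[OF dP[OF that]])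
        have e2: "DERIV (\<lambda>s. \<epsilon> * (exp (- \<alpha> * P s) - 1)) s :> \<epsilon> * (exp (- \<alpha> * P s) * (- \<alpha> * P' s) - 0)"
          by (rule DERIV_cmult[OF DERIV_diff[OF e DERIV_const]])
        show ?thesis unfolding f_def f'_def
          using DERIV_add[OF line_deriv_real[OF d\<phi>[OF lineV[OF that]]] e2] by simp
      qed
      define P'' where "P'' = frechet_derivative (\<lambda>y. frechet_derivative \<rho> (at y) c) (at xm) c + \<beta> * (2 * (norm c)\<^sup>2)"
      have df'0: "DERIV f' 0 :> frechet_derivative (\<lambda>y. frechet_derivative \<phi> (at y) c) (at xm) c
          + \<epsilon> * ((exp (- \<alpha> * P 0) * (- \<alpha> * P' 0)) * (- \<alpha> * P' 0) + (- \<alpha> * P'') * exp (- \<alpha> * P 0))"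
      proof -
        have 1: "DERIV (\<lambda>s. frechet_derivative \<phi> (at (xm + s *\<^sub>R c)) c) 0 :> frechet_derivative (\<lambda>y. frechet_derivative \<phi> (at y) c) (at xm) c"
          using line_deriv_real[of "\<lambda>y. frechet_derivative \<phi> (at y) c" xm 0 c] d\<phi>1[OF xmV] by simp
        have e: "DERIV (\<lambda>s. exp (- \<alpha> * P s)) 0 :> exp (- \<alpha> * P 0) * (- \<alpha> * P' 0)"
          by (rule DERIV_fun_exp) (rule DERIV_cmult[OF dP]; use \<delta> in simp)
        have p: "DERIV (\<lambda>s. - \<alpha> * P' s) 0 :> - \<alpha> * P''"
          unfolding P''_def by (rule DERIV_cmult[OF dP'0])
        have m: "DERIV (\<lambda>s. exp (- \<alpha> * P s) * (- \<alpha> * P' s)) 0 :>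
            (exp (- \<alpha> * P 0) * (- \<alpha> * P' 0)) * (- \<alpha> * P' 0) + (- \<alpha> * P'') * exp (- \<alpha> * P 0)"
          using DERIV_mult[OF e p] by simp
        show ?thesis unfolding f'_def using DERIV_add[OF 1 DERIV_cmult[OF m]] by simp
      qed
      have mx: "f s \<le> f 0" if "\<bar>s\<bar> < \<delta>" for s
        using xm(2)[of "xm + s *\<^sub>R c"] lineO[OF that] OK unfolding fv by auto
      have le0: "frechet_derivative (\<lambda>y. frechet_derivative \<phi> (at y) c) (at xm) c
          + \<epsilon> * ((exp (- \<alpha> * P 0) * (- \<alpha> * P' 0)) * (- \<alpha> * P' 0) + (- \<alpha> * P'') * exp (- \<alpha> * P 0)) \<le> 0"
        by (rule second_deriv_max[OF \<delta>(1) df df'0 mx])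
      have P0: "P 0 = \<sigma> xm" using \<sigma>P[of 0] by simp
      have P'0: "P' 0 = frechet_derivative \<rho> (at xm) c + \<beta> * (2 * ((xm - x0) \<bullet> c))" unfolding P'_def by simp
      have P''v: "P'' = frechet_derivative (\<lambda>y. frechet_derivative \<rho> (at y) c) (at xm) c + 2 * \<beta>"
        unfolding P''_def nc by simp
      show ?thesis using le0 unfolding P0 P'0 P''v by (simp add: algebra_simps power2_eq_square)
    qed
    define E where "E = \<epsilon> * exp (- \<alpha> * \<sigma> xm)"
    have E: "E > 0" unfolding E_def using \<epsilon> by simp
    have sum_le: "(\<Sum>c\<in>Basis. frechet_derivative (\<lambda>y. frechet_derivative \<phi> (at y) c) (at xm) c
        + E * (\<alpha>\<^sup>2 * (frechet_derivative \<rho> (at xm) c + \<beta> * (2 * ((xm - x0) \<bullet> c)))\<^sup>2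
            - \<alpha> * (frechet_derivative (\<lambda>y. frechet_derivative \<rho> (at y) c) (at xm) c + 2 * \<beta>))) \<le> 0"
      using each unfolding E_def by (intro sum_nonpos) (simp add: mult.assoc)
    have sum_eq: "(\<Sum>c\<in>Basis. frechet_derivative (\<lambda>y. frechet_derivative \<phi> (at y) c) (at xm) c
        + E * (\<alpha>\<^sup>2 * (frechet_derivative \<rho> (at xm) c + \<beta> * (2 * ((xm - x0) \<bullet> c)))\<^sup>2
            - \<alpha> * (frechet_derivative (\<lambda>y. frechet_derivative \<rho> (at y) c) (at xm) c + 2 * \<beta>)))
        = lap \<phi> xm + E * \<alpha> * (\<alpha> * Q xm - (L\<rho> xm + 2 * \<beta> * DIM('a)))"
      unfolding lap_def Q_def L\<rho>_def
      by (simp add: sum.distrib sum_subtractf sum_distrib_left algebra_simps power2_eq_square)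
    have "lap \<phi> xm \<ge> 0"
      using lp[of xm] \<sigma>xm dxm r unfolding \<sigma>_def by auto
    moreover have "E * \<alpha> * (\<alpha> * Q xm - (L\<rho> xm + 2 * \<beta> * DIM('a))) > 0"
      using key[of xm] xm(1) E \<alpha> unfolding K_def by simp
    ultimately show ?thesis using sum_le sum_eq by linarith
  next
    case False
    then consider "\<sigma> xm = 0" | "dist x0 xm = r" using xm(1) unfolding K_def by force
    then show ?thesis
    proof cases
      case 1
      have "h xm = 0" unfolding h_def using 1 by simp
      moreover have "\<phi> xm \<le> M"
        using le[of xm] xm(1) r 1 unfolding K_def \<sigma>_def by auto
      ultimately show ?thesis unfolding v_def by simp
    next
      case 2
      have "xm \<in> Ks" using 2 xm(1) unfolding Ks_def by auto
      then have "\<phi> xm \<le> M - \<eta>" using \<eta> by blast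
      moreover have "\<epsilon> * h xm \<le> \<epsilon> * C"
        using C(2)[OF xm(1)] \<epsilon> by (intro mult_left_mono) auto
      moreover have "\<epsilon> * C = \<eta> / 2" unfolding \<epsilon>_def using C by simp
      ultimately show ?thesis unfolding v_def using \<eta> by simp
    qed
  qed
  have vx0: "v x0 = M" unfolding v_def h_def \<sigma>_def using \<rho>0 M by simp
  have vK: "v y \<le> M" if "y \<in> K" for y using xm(2)[OF that] vM by simp
  have GG: "G \<bullet> G > 0" using G by simp
  have D\<rho>G: "frechet_derivative \<rho> (at x0) (- G) = - (G \<bullet> G)"
    using grad_inner[OF d\<rho>[OF x0V], of "- G"] unfolding G_def by simp
  define S0 where "S0 s = \<rho> (x0 + s *\<^sub>R (- G)) + \<beta> * (s\<^sup>2 * (norm G)\<^sup>2)" for s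
  have \<sigma>S0: "\<sigma> (x0 + s *\<^sub>R (- G)) = S0 s" for s
    unfolding \<sigma>_def S0_def by (simp add: power_mult_distrib)
  have dS0: "DERIV S0 0 :> - (G \<bullet> G)"
  proof -
    have 1: "DERIV (\<lambda>s. \<rho> (x0 + s *\<^sub>R (- G))) 0 :> - (G \<bullet> G)"
      using line_deriv_real[of \<rho> x0 0 "- G"] d\<rho>[OF x0V] D\<rho>G by simp
    have 2: "DERIV (\<lambda>s. \<beta> * (s\<^sup>2 * (norm G)\<^sup>2)) 0 :> 0"
      by (auto intro!: derivative_eq_intros)
    show ?thesis unfolding S0_def using DERIV_add[OF 1 2] by simp
  qed
  have S00: "S0 0 = 0" unfolding S0_def using \<rho>0 by simp
  obtain d where d: "d > 0" "\<And>h. h > 0 \<Longrightarrow> h < d \<Longrightarrow> S0 0 > S0 (0 + h)"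
    using DERIV_neg_dec_right[OF dS0] GG by auto
  define \<delta>2 where "\<delta>2 = min d (r / (norm G + 1))"
  have "norm G + 1 > 0" by (smt (verit) norm_ge_zero)
  then have \<delta>2: "\<delta>2 > 0" unfolding \<delta>2_def using d r by simp
  have inK: "x0 + s *\<^sub>R (- G) \<in> K" if "0 < s" "s < \<delta>2" for s
  proof -
    have "\<sigma> (x0 + s *\<^sub>R (- G)) < 0" using d(2)[of s] that S00 \<sigma>S0[of s] unfolding \<delta>2_def by simp
    moreover have "dist x0 (x0 + s *\<^sub>R (- G)) \<le> r"
    proof -
      have "dist x0 (x0 + s *\<^sub>R (- G)) = s * norm G" using that by (simp add: dist_norm)
      also have "\<dots> \<le> (r / (norm G + 1)) * norm G"
        using that unfolding \<delta>2_def by (intro mult_right_mono) auto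
      also have "\<dots> \<le> r"
      proof -
        have "(r / (norm G + 1)) * norm G = r * (norm G / (norm G + 1))" by simp
        also have "\<dots> \<le> r * 1"
        proof (intro mult_left_mono)
          have "norm G + 1 > 0" by (smt (verit) norm_ge_zero)
          then show "norm G / (norm G + 1) \<le> 1" by (simp add: divide_le_eq_1)
        qed (use r in auto)
        finally show ?thesis by simp
      qed
      finally show ?thesis .
    qed
    ultimately show ?thesis unfolding K_def by auto
  qed
  define k where "k s = \<phi> (x0 + s *\<^sub>R (- G)) + \<epsilon> * (exp (- \<alpha> * S0 s) - 1)" for s
  have kv: "k s = v (x0 + s *\<^sub>R (- G))" for s unfolding k_def v_def h_def \<sigma>S0 by simp
  have dk: "DERIV k 0 :> frechet_derivative \<phi> (at x0) (- G) + \<epsilon> * (exp (- \<alpha> * S0 0) * (- \<alpha> * - (G \<bullet> G)) - 0)"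
  proof -
    have 1: "DERIV (\<lambda>s. \<phi> (x0 + s *\<^sub>R (- G))) 0 :> frechet_derivative \<phi> (at x0) (- G)"
      using line_deriv_real[of \<phi> x0 0 "- G"] d\<phi>[OF x0V] by simp
    have e: "DERIV (\<lambda>s. exp (- \<alpha> * S0 s)) 0 :> exp (- \<alpha> * S0 0) * (- \<alpha> * - (G \<bullet> G))"
      by (rule DERIV_fun_exp) (rule DERIV_cmult[OF dS0])
    show ?thesis unfolding k_def using DERIV_add[OF 1 DERIV_cmult[OF DERIV_diff[OF e DERIV_const]]] by simp
  qed
  have "frechet_derivative \<phi> (at x0) (- G) + \<epsilon> * (exp (- \<alpha> * S0 0) * (- \<alpha> * - (G \<bullet> G)) - 0) \<le> 0"
  proof (rule right_max_deriv[OF dk \<delta>2])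
    fix s assume "0 < s" "s < \<delta>2"
    then show "k s \<le> k 0" using vK[OF inK] vx0 kv[of s] kv[of 0] by simp
  qed
  moreover have "frechet_derivative \<phi> (at x0) (- G) = - frechet_derivative \<phi> (at x0) G"
    using linear_neg[OF fd_linear[OF d\<phi>[OF x0V]]] by simp
  ultimately have "frechet_derivative \<phi> (at x0) G \<ge> \<epsilon> * (\<alpha> * (G \<bullet> G))"
    unfolding S00 by simp
  moreover have "\<epsilon> * (\<alpha> * (G \<bullet> G)) > 0" using \<epsilon> \<alpha> GG by simp
  ultimately show ?thesis unfolding G_def by simp
qed



lemma Ck_on_mono: "Ck_on k S f \<Longrightarrow> T \<subseteq> S \<Longrightarrow> Ck_on k T f"
  unfolding Ck_on_def using continuous_on_subset differentiable_on_subset by blast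

lemma quad_hd:
  fixes y :: "'a::euclidean_space"
  shows "((\<lambda>x. (x - y) \<bullet> (x - y) - R) has_derivative (\<lambda>v. 2 * ((x - y) \<bullet> v))) (at x)"
proof -
  have "((\<lambda>x. (x - y) \<bullet> (x - y) - R) has_derivative (\<lambda>v. v \<bullet> (x - y) + (x - y) \<bullet> v)) (at x)"
    by (rule has_derivative_eq_rhs, (rule derivative_intros)+) auto
  then show ?thesis by (simp add: inner_commute)
qed


lemma quad_fd:
  fixes y :: "'a::euclidean_space"
  shows "frechet_derivative (\<lambda>x. (x - y) \<bullet> (x - y) - R) (at x) = (\<lambda>v. 2 * ((x - y) \<bullet> v))"
  by (rule frechet_derivative_at[OF quad_hd, symmetric])

lemma lin_hd:
  fixes y :: "'a::euclidean_space"
  shows "((\<lambda>x. 2 * ((x - y) \<bullet> c)) has_derivative (\<lambda>v. 2 * (v \<bullet> c))) (at x)"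
  by (auto intro!: derivative_eq_intros)

lemma quad_C2:
  fixes y :: "'a::euclidean_space"
  shows "Ck_on 2 V (\<lambda>x. (x - y) \<bullet> (x - y) - R)"
proof -
  let ?f = "\<lambda>x. (x - y) \<bullet> (x - y) - R"
  have d1: "dds [c] ?f = (\<lambda>x. 2 * ((x - y) \<bullet> c))" for c
    by (simp add: quad_fd)
  have d2: "dds [d, c] ?f = (\<lambda>x. 2 * (d \<bullet> c))" for c d
  proof
    fix x
    have "dds [d, c] ?f x = frechet_derivative (dds [c] ?f) (at x) d" by (simp only: dds.simps(2))
    also have "\<dots> = frechet_derivative (\<lambda>x. 2 * ((x - y) \<bullet> c)) (at x) d" by (simp only: d1)
    also have "\<dots> = 2 * (d \<bullet> c)"
      by (simp add: frechet_derivative_at[OF lin_hd[of y c], symmetric])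
    finally show "dds [d, c] ?f x = 2 * (d \<bullet> c)" .
  qed
  have dif0: "?f differentiable_on V"
    using quad_hd[of y R] unfolding differentiable_on_def differentiable_def
    by (blast intro: has_derivative_at_withinI)
  have dif1: "(\<lambda>x. 2 * ((x - y) \<bullet> c)) differentiable_on V" for c
    using lin_hd[of y c] unfolding differentiable_on_def differentiable_def
    by (blast intro: has_derivative_at_withinI)
  show ?thesis unfolding Ck_on_def
  proof (intro conjI allI impI)
    fix vs :: "'a list" assume "length vs < 2"
    then consider "vs = []" | c where "vs = [c]"
      by (cases vs) auto
    then show "dds vs ?f differentiable_on V"
    proof cases
      case 1 then show ?thesis using dif0 by simp
    next
      case (2 c) then show ?thesis using dif1[of c] d1[of c] by simp
    qed
  next
    fix vs :: "'a list" assume "length vs = 2"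
    then obtain d c where "vs = [d, c]"
      by (auto simp: length_Suc_conv numeral_2_eq_2)
    then show "continuous_on V (dds vs ?f)"
      using d2 by simp
  qed
qed



lemma domain_facts:
  fixes \<Omega> :: "'a::euclidean_space set"
  assumes dom: "smooth_domain \<Omega> \<rho>"
  shows dom_open: "open \<Omega>"
    and dom_C2: "Ck_on 2 UNIV \<rho>"
    and dom_cont: "continuous_on UNIV \<rho>"
    and dom_closure: "\<And>x. x \<in> closure \<Omega> \<Longrightarrow> \<rho> x \<le> 0"
    and dom_frontier: "\<And>x. x \<in> frontier \<Omega> \<Longrightarrow> \<rho> x = 0"
    and dom_compact: "compact (closure \<Omega>)"
proof -
  have sm: "smooth_on UNIV \<rho>" and eq: "\<Omega> = {x. \<rho> x < 0}" and bd: "bounded \<Omega>"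
    using dom unfolding smooth_domain_def by auto
  show C2: "Ck_on 2 UNIV \<rho>" using sm unfolding smooth_on_def by blast
  show ct: "continuous_on UNIV \<rho>" using C2_c0[OF C2] by simp
  show op: "open \<Omega>" unfolding eq using continuous_open_preimage[OF ct open_UNIV open_lessThan[of 0]]
    by (simp add: vimage_def)
  have cl: "closed {x. \<rho> x \<le> 0}" using continuous_closed_preimage[OF ct closed_UNIV closed_atMost[of 0]]
    by (simp add: vimage_def)
  have "\<Omega> \<subseteq> {x. \<rho> x \<le> 0}" unfolding eq by auto
  then have clo: "closure \<Omega> \<subseteq> {x. \<rho> x \<le> 0}" using cl closure_minimal by blast
  then show "\<And>x. x \<in> closure \<Omega> \<Longrightarrow> \<rho> x \<le> 0" by auto
  show "\<And>x. x \<in> frontier \<Omega> \<Longrightarrow> \<rho> x = 0"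
  proof -
    fix x assume "x \<in> frontier \<Omega>"
    then have "x \<in> closure \<Omega>" "x \<notin> \<Omega>" using op by (auto simp: frontier_def interior_open)
    then show "\<rho> x = 0" using clo unfolding eq by force
  qed
  show "compact (closure \<Omega>)" using bd by (simp add: compact_closure)
qed

lemma neumann_const:
  fixes \<Omega> :: "'a::euclidean_space set" and \<phi> \<rho> :: "'a \<Rightarrow> real"
  assumes dom: "smooth_domain \<Omega> \<rho>"
    and V: "open V" "closure \<Omega> \<subseteq> V" and c\<phi>: "Ck_on 2 V \<phi>"
    and lap0: "\<And>x. x \<in> \<Omega> \<Longrightarrow> lap \<phi> x = 0"
    and neu: "\<And>x. x \<in> frontier \<Omega> \<Longrightarrow> frechet_derivative \<phi> (at x) (grad \<rho> x) = 0"
  shows "\<And>x. x \<in> \<Omega> \<Longrightarrow> grad \<phi> x = 0"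
proof -
  have op: "open \<Omega>" by (rule dom_open[OF dom])
  have con: "connected \<Omega>" using dom unfolding smooth_domain_def by auto
  have cpt: "compact (closure \<Omega>)" by (rule dom_compact[OF dom])
  have ngrad: "\<And>x. \<rho> x = 0 \<Longrightarrow> grad \<rho> x \<noteq> 0" and eq: "\<Omega> = {x. \<rho> x < 0}"
    using dom unfolding smooth_domain_def by auto
  have C2\<rho>: "Ck_on 2 V \<rho>" using Ck_on_mono[OF dom_C2[OF dom]] by blast
  have c\<phi>0: "continuous_on V \<phi>" by (rule C2_c0[OF c\<phi> V(1)])
  have d\<phi>: "\<And>y. y \<in> V \<Longrightarrow> \<phi> differentiable (at y)" by (rule C2_d0[OF c\<phi> V(1)])
  have \<Omega>V: "\<Omega> \<subseteq> V" using V(2) closure_subset by blast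
  have inO: "\<And>w. \<rho> w < 0 \<Longrightarrow> w \<in> \<Omega>" by (subst eq) simp
  show "grad \<phi> x = 0" if x: "x \<in> \<Omega>" for x
  proof -
    have ne: "closure \<Omega> \<noteq> {}" using x closure_subset by blast
    obtain xM where xM: "xM \<in> closure \<Omega>" "\<And>y. y \<in> closure \<Omega> \<Longrightarrow> \<phi> y \<le> \<phi> xM"
      using continuous_attains_sup[OF cpt ne continuous_on_subset[OF c\<phi>0 V(2)]] by blast
    define M where "M = \<phi> xM"
    have allM: "\<forall>y\<in>\<Omega>. \<phi> y = M"
    proof (rule ccontr)
      assume "\<not> (\<forall>y\<in>\<Omega>. \<phi> y = M)"
      then obtain x1 where x1: "x1 \<in> \<Omega>" "\<phi> x1 \<noteq> M" by blast
      define S where "S = {y \<in> \<Omega>. \<phi> y = M}"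
      show False
      proof (cases "S = {}")
        case True
        have xMnot: "xM \<notin> \<Omega>" using True unfolding S_def M_def by auto
        have xMfr: "xM \<in> frontier \<Omega>" using xM(1) xMnot op by (simp add: frontier_def interior_open)
        have \<rho>0: "\<rho> xM = 0" by (rule dom_frontier[OF dom xMfr])
        have xMV: "xM \<in> V" using xM(1) V(2) by auto
        obtain r0 where r0: "r0 > 0" "cball xM r0 \<subseteq> V" using V(1) xMV open_contains_cball by blast
        have pos: "\<And>x. x \<noteq> xM \<Longrightarrow> (0::real) < 1 * (norm (x - xM))\<^sup>2" by simp
        have hop: "frechet_derivative \<phi> (at xM) (grad \<rho> xM) > 0"
        proof (rule hopf[OF V(1) r0(2) r0(1) c\<phi> C2\<rho> \<rho>0 ngrad[OF \<rho>0], of 1 M])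
          show "(0::real) < 1" by simp
          show "\<phi> xM = M" unfolding M_def ..
        next
          fix w assume w: "w \<in> cball xM r0" "\<rho> w + 1 * (norm (w - xM))\<^sup>2 \<le> 0"
          show "\<phi> w \<le> M"
          proof (cases "w = xM")
            case True then show ?thesis unfolding M_def by simp
          next
            case False
            then have "\<rho> w < 0" using w(2) pos[of w] by linarith
            then have "w \<in> closure \<Omega>" using inO closure_subset by blast
            then show ?thesis using xM(2) unfolding M_def by blast
          qed
        next
          fix w assume w: "w \<in> cball xM r0" "w \<noteq> xM" "\<rho> w + 1 * (norm (w - xM))\<^sup>2 \<le> 0"
          then have "\<rho> w < 0" using pos[of w] by linarith
          then have wO: "w \<in> \<Omega>" using inO by blast
          then have "\<phi> w \<le> M" using xM(2) closure_subset unfolding M_def by blast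
          moreover have "\<phi> w \<noteq> M" using True wO unfolding S_def by blast
          ultimately show "\<phi> w < M" by simp
        next
          fix w assume w: "w \<in> ball xM r0" "\<rho> w + 1 * (norm (w - xM))\<^sup>2 < 0"
          then have "\<rho> w < 0" by (smt (verit) zero_le_power2)
          then have "w \<in> \<Omega>" using inO by blast
          then show "0 \<le> lap \<phi> w" using lap0 by simp
        qed
        then show False using neu[OF xMfr] by simp
      next
        case False
        have contO: "continuous_on \<Omega> \<phi>" using continuous_on_subset[OF c\<phi>0 \<Omega>V] .
        have clS: "closedin (top_of_set \<Omega>) S"
          unfolding S_def by (rule continuous_closedin_preimage_constant[OF contO])
        have SO: "S \<noteq> \<Omega>" using x1 unfolding S_def by auto
        have nopen: "\<not> open S"
        proof
          assume "open S"
          then have "openin (top_of_set \<Omega>) S" by (intro open_subset) (auto simp: S_def)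
          then show False using con clS False SO unfolding connected_clopen by blast
        qed
        then obtain z0 where z0: "z0 \<in> S" "\<And>e. e > 0 \<Longrightarrow> \<not> ball z0 e \<subseteq> S"
          unfolding open_contains_ball by blast
        have z0O: "z0 \<in> \<Omega>" and z0M: "\<phi> z0 = M" using z0(1) unfolding S_def by auto
        obtain r4 where r4: "r4 > 0" "cball z0 r4 \<subseteq> \<Omega>" using op z0O open_contains_cball by blast
        define r where "r = r4 / 4"
        have r: "r > 0" using r4 unfolding r_def by simp
        obtain y where y: "y \<in> ball z0 r" "y \<notin> S" using z0(2)[OF r] by blast
        have "cball z0 (3 * r) \<subseteq> cball z0 r4" using r4 unfolding r_def by (intro subset_cball) simp
        then have cb: "cball z0 (3 * r) \<subseteq> \<Omega>" using r4 by blast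
        have yO: "y \<in> \<Omega>" using y(1) cb r by auto
        have leM: "\<And>w. w \<in> \<Omega> \<Longrightarrow> \<phi> w \<le> M" using xM(2) closure_subset unfolding M_def by blast
        have yM: "\<phi> y < M" using leM[OF yO] y(2) yO unfolding S_def by auto
        define Z where "Z = cball y r \<inter> \<phi> -` {M}"
        have cyr: "cball y r \<subseteq> \<Omega>"
        proof
          fix w assume "w \<in> cball y r"
          then have "dist z0 w \<le> 3 * r" using y(1) dist_triangle[of z0 w y] r by (auto simp: dist_commute)
          then show "w \<in> \<Omega>" using cb by auto
        qed
        have compZ: "compact Z"
        proof -
          have "closed Z" unfolding Z_def
            by (rule continuous_closed_preimage[OF continuous_on_subset[OF c\<phi>0] closed_cball closed_singleton])
              (use cyr \<Omega>V in auto)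
          from compact_Int_closed[OF compact_cball this, of y r] show ?thesis unfolding Z_def by simp
        qed
        have z0Z: "z0 \<in> Z" unfolding Z_def using y(1) z0M by (auto simp: dist_commute)
        have Zne: "Z \<noteq> {}" using z0Z by auto
        have contd: "continuous_on Z (\<lambda>w. dist y w)" by (intro continuous_intros)
        obtain z where z: "z \<in> Z" "\<And>w. w \<in> Z \<Longrightarrow> dist y z \<le> dist y w"
          using continuous_attains_inf[OF compZ Zne contd] by blast
        define R where "R = dist y z"
        have zM: "\<phi> z = M" and zc: "z \<in> cball y r" using z(1) unfolding Z_def by auto
        have R: "R > 0" unfolding R_def using zM yM by auto
        have Rr: "R < r" unfolding R_def using z(2)[OF z0Z] y(1) by (simp add: dist_commute)
        have zO: "z \<in> \<Omega>" using zc cyr by auto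
        have ltM: "\<phi> w < M" if "dist y w < R" for w
        proof -
          have wc: "w \<in> cball y r" using that Rr by simp
          have "\<phi> w \<le> M" using leM wc cyr by auto
          moreover have "\<phi> w \<noteq> M"
          proof
            assume "\<phi> w = M"
            then have "w \<in> Z" unfolding Z_def using wc by auto
            then show False using z(2)[of w] that unfolding R_def by linarith
          qed
          ultimately show ?thesis by simp
        qed
        define \<rho>1 where "\<rho>1 = (\<lambda>x. (x - y) \<bullet> (x - y) - R\<^sup>2)"
        have dsq: "\<And>w. (w - y) \<bullet> (w - y) = (dist y w)\<^sup>2"
          by (simp add: dot_square_norm dist_norm norm_minus_commute)
        have czr: "cball z r \<subseteq> \<Omega>"
        proof
          fix w assume "w \<in> cball z r"
          then have "dist y w \<le> 2 * r" using dist_triangle[of y w z] Rr unfolding R_def by (auto simp: dist_commute)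
          then have "dist z0 w \<le> 3 * r" using y(1) dist_triangle[of z0 w y] by (auto simp: dist_commute)
          then show "w \<in> \<Omega>" using cb by auto
        qed
        have \<rho>1z: "\<rho>1 z = 0" unfolding \<rho>1_def dsq R_def by simp
        have d\<rho>1: "\<rho>1 differentiable (at z)" unfolding \<rho>1_def using quad_hd differentiable_def by blast
        have gz: "grad \<rho>1 z \<noteq> 0"
        proof
          assume g0: "grad \<rho>1 z = 0"
          have "frechet_derivative \<rho>1 (at z) (z - y) = grad \<rho>1 z \<bullet> (z - y)" by (rule grad_inner[OF d\<rho>1])
          also have "\<dots> = 0" using g0 by simp
          finally have "2 * ((z - y) \<bullet> (z - y)) = 0" unfolding \<rho>1_def quad_fd .
          then show False using R unfolding dsq R_def by simp
        qed
        have pos: "\<And>w. w \<noteq> z \<Longrightarrow> (0::real) < 1 * (norm (w - z))\<^sup>2" by simp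
        have hop: "frechet_derivative \<phi> (at z) (grad \<rho>1 z) > 0"
        proof -
          have czV: "cball z r \<subseteq> V" using czr \<Omega>V by auto
          have C2\<rho>1: "Ck_on 2 V \<rho>1" unfolding \<rho>1_def by (rule quad_C2)
          have b1: "(0::real) < 1" by simp
          have le1: "\<phi> w \<le> M" if "w \<in> cball z r" "\<rho>1 w + 1 * (norm (w - z))\<^sup>2 \<le> 0" for w
            using leM czr that(1) by auto
          have lt1: "\<phi> w < M" if w: "w \<in> cball z r" "w \<noteq> z" "\<rho>1 w + 1 * (norm (w - z))\<^sup>2 \<le> 0" for w
          proof -
            have e: "\<rho>1 w = (dist y w)\<^sup>2 - R\<^sup>2" unfolding \<rho>1_def using dsq[of w] by simp
            have "(dist y w)\<^sup>2 < R\<^sup>2" using w(3) pos[OF w(2)] unfolding e by linarith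
            then have "dist y w < R" by (rule power2_less_imp_less) (use R in simp)
            then show "\<phi> w < M" by (rule ltM)
          qed
          have lp1: "0 \<le> lap \<phi> w" if "w \<in> ball z r" "\<rho>1 w + 1 * (norm (w - z))\<^sup>2 < 0" for w
          proof -
            have "w \<in> \<Omega>" using czr that(1) by auto
            then show ?thesis using lap0 by simp
          qed
          show ?thesis by (rule hopf[OF V(1) czV r c\<phi> C2\<rho>1 \<rho>1z gz b1 zM le1 lt1 lp1])
        qed
        have "eventually (\<lambda>w. w \<in> \<Omega>) (at z)" by (rule eventually_at_in_open'[OF op zO])
        then have ev: "eventually (\<lambda>w. \<phi> w \<le> \<phi> z) (at z)"
          by (rule eventually_mono) (use leM zM in auto)
        have zV: "z \<in> V" using zO \<Omega>V by auto
        have "frechet_derivative \<phi> (at z) = (\<lambda>h. 0)"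
          by (rule has_derivative_local_max[OF fd_works[OF d\<phi>[OF zV]] ev])
        then show False using hop by simp
      qed
    qed
    have "frechet_derivative \<phi> (at x) = frechet_derivative (\<lambda>_. M) (at x)"
      by (rule fd_local[OF op x]) (use allM in auto)
    then show ?thesis unfolding grad_def by simp
  qed
qed



lemma fd_sum:
  assumes "finite I" "\<And>i. i \<in> I \<Longrightarrow> f i differentiable (at z)"
  shows "frechet_derivative (\<lambda>y. \<Sum>i\<in>I. f i y) (at z) v = (\<Sum>i\<in>I. frechet_derivative (f i) (at z) v)"
proof -
  have "((\<lambda>y. \<Sum>i\<in>I. f i y) has_derivative (\<lambda>v. \<Sum>i\<in>I. frechet_derivative (f i) (at z) v)) (at z)"
    using assms(2) by (intro has_derivative_sum) (simp add: fd_works)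
  then show ?thesis by (simp add: frechet_derivative_at[symmetric])
qed

lemma diff_sum:
  assumes "\<And>i. i \<in> I \<Longrightarrow> f i differentiable (at z)"
  shows "(\<lambda>y. \<Sum>i\<in>I. f i y) differentiable (at z)"
proof -
  have "((\<lambda>y. \<Sum>i\<in>I. f i y) has_derivative (\<lambda>v. \<Sum>i\<in>I. frechet_derivative (f i) (at z) v)) (at z)"
    using assms by (intro has_derivative_sum) (simp add: fd_works)
  then show ?thesis unfolding differentiable_def by blast
qed

lemma fd_add:
  assumes "f differentiable (at z)" "g differentiable (at z)"
  shows "frechet_derivative (\<lambda>y. f y + g y) (at z) v = frechet_derivative f (at z) v + frechet_derivative g (at z) v"
proof -
  have "((\<lambda>y. f y + g y) has_derivative (\<lambda>v. frechet_derivative f (at z) v + frechet_derivative g (at z) v)) (at z)"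
    using fd_works[OF assms(1)] fd_works[OF assms(2)] by (rule has_derivative_add)
  then show ?thesis by (simp add: frechet_derivative_at[symmetric])
qed

lemma fd_diff:
  assumes "f differentiable (at z)" "g differentiable (at z)"
  shows "frechet_derivative (\<lambda>y. f y - g y) (at z) v = frechet_derivative f (at z) v - frechet_derivative g (at z) v"
proof -
  have "((\<lambda>y. f y - g y) has_derivative (\<lambda>v. frechet_derivative f (at z) v - frechet_derivative g (at z) v)) (at z)"
    using fd_works[OF assms(1)] fd_works[OF assms(2)] by (rule has_derivative_diff)
  then show ?thesis by (simp add: frechet_derivative_at[symmetric])
qed

lemma fd_scale:
  assumes "f differentiable (at z)"
  shows "frechet_derivative (\<lambda>y. c *\<^sub>R f y) (at z) v = c *\<^sub>R frechet_derivative f (at z) v"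
proof -
  have "((\<lambda>y. c *\<^sub>R f y) has_derivative (\<lambda>v. c *\<^sub>R frechet_derivative f (at z) v)) (at z)"
    using fd_works[OF assms(1)] by (rule has_derivative_scaleR_right)
  then show ?thesis by (simp add: frechet_derivative_at[symmetric])
qed

lemma fd_uminus:
  assumes "f differentiable (at z)"
  shows "frechet_derivative (\<lambda>y. - f y) (at z) v = - frechet_derivative f (at z) v"
proof -
  have "((\<lambda>y. - f y) has_derivative (\<lambda>v. - frechet_derivative f (at z) v)) (at z)"
    using fd_works[OF assms(1)] by (rule has_derivative_minus)
  then show ?thesis by (simp add: frechet_derivative_at[symmetric])
qed

lemma diff_local:
  assumes "open S" "x \<in> S" "\<And>y. y \<in> S \<Longrightarrow> f y = g y" "g differentiable (at x)"
  shows "f differentiable (at x)"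
proof -
  obtain D where "(g has_derivative D) (at x)" using assms(4) unfolding differentiable_def by blast
  then have "(f has_derivative D) (at x)"
    by (rule has_derivative_transform_within_open[OF _ assms(1,2)]) (use assms(3) in auto)
  then show ?thesis unfolding differentiable_def by blast
qed

lemma slice_open: "open U \<Longrightarrow> open {y. (y, t) \<in> U}"
proof -
  assume U: "open U"
  have "continuous_on UNIV (\<lambda>y::'a::topological_space. (y, t::'b::topological_space))"
    by (intro continuous_intros)
  then have "open (UNIV \<inter> (\<lambda>y. (y, t)) -` U)"
    by (rule continuous_open_preimage[OF _ open_UNIV U])
  then show ?thesis by (simp add: vimage_def)
qed

lemma dds_slice:
  fixes F :: "'a::real_normed_vector \<times> real \<Rightarrow> 'b::real_normed_vector"
  assumes sm: "smooth_on U F" and U: "open U"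
  shows "(y, t) \<in> U \<Longrightarrow> dds vs (\<lambda>y. F (y, t)) y = dds (map (\<lambda>v. (v, 0)) vs) F (y, t)"
proof (induction vs arbitrary: y)
  case Nil then show ?case by simp
next
  case (Cons v vs)
  have "dds (v # vs) (\<lambda>y. F (y, t)) y = frechet_derivative (dds vs (\<lambda>y. F (y, t))) (at y) v" by simp
  also have "\<dots> = frechet_derivative (\<lambda>y. dds (map (\<lambda>v. (v, 0)) vs) F (y, t)) (at y) v"
    using fd_local[OF slice_open[OF U, of t], of y "dds vs (\<lambda>y. F (y, t))"] Cons by auto
  also have "\<dots> = frechet_derivative (dds (map (\<lambda>v. (v, 0)) vs) F) (at (y, t)) (v, 0)"
    by (rule slice_fd[OF smooth_diff[OF sm U Cons.prems]])
  also have "\<dots> = dds (map (\<lambda>v. (v, 0)) (v # vs)) F (y, t)" by simp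
  finally show ?case .
qed

lemma dds_inner:
  fixes F :: "'v::real_normed_vector \<Rightarrow> 'b::real_inner"
  assumes sm: "smooth_on U F" and U: "open U"
  shows "z \<in> U \<Longrightarrow> dds vs (\<lambda>z. F z \<bullet> c) z = dds vs F z \<bullet> c"
proof (induction vs arbitrary: z)
  case Nil then show ?case by simp
next
  case (Cons v vs)
  have "dds (v # vs) (\<lambda>z. F z \<bullet> c) z = frechet_derivative (dds vs (\<lambda>z. F z \<bullet> c)) (at z) v" by simp
  also have "\<dots> = frechet_derivative (\<lambda>z. dds vs F z \<bullet> c) (at z) v"
    using fd_local[OF U Cons.prems, of "dds vs (\<lambda>z. F z \<bullet> c)"] Cons by auto
  also have "\<dots> = frechet_derivative (dds vs F) (at z) v \<bullet> c"
    by (rule fd_inner[OF smooth_diff[OF sm U Cons.prems]])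
  finally show ?case by simp
qed

lemma smooth_inner:
  fixes F :: "'v::real_normed_vector \<Rightarrow> 'b::real_inner"
  assumes sm: "smooth_on U F" and U: "open U"
  shows "smooth_on U (\<lambda>z. F z \<bullet> c)"
  unfolding smooth_on_def Ck_on_def
proof (intro allI conjI impI)
  fix k :: nat and vs :: "'v list"
  show "dds vs (\<lambda>z. F z \<bullet> c) differentiable_on U"
  proof (rule differentiable_at_imp_differentiable_on)
    fix z assume z: "z \<in> U"
    have "(\<lambda>z. dds vs F z \<bullet> c) differentiable (at z)"
      using smooth_diff[OF sm U z, of vs] by (simp add: differentiable_inner)
    then show "dds vs (\<lambda>z. F z \<bullet> c) differentiable (at z)"
      by (rule diff_local[OF U z, rotated]) (use dds_inner[OF sm U] in auto)
  qed
  show "continuous_on U (dds vs (\<lambda>z. F z \<bullet> c))"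
  proof -
    have "continuous_on U (\<lambda>z. dds vs F z \<bullet> c)"
      by (intro continuous_intros smooth_cont[OF sm])
    then show ?thesis by (rule continuous_on_cong[THEN iffD1, rotated 2]) (use dds_inner[OF sm U] in auto)
  qed
qed

lemma dds_sym:
  fixes f :: "'v::real_normed_vector \<Rightarrow> real"
  assumes sm: "smooth_on U f" and U: "open U" and z: "z \<in> U"
  shows "dds (a # b # vs) f z = dds (b # a # vs) f z"
proof -
  have "frechet_derivative (\<lambda>y. frechet_derivative (dds vs f) (at y) b) (at z) a =
        frechet_derivative (\<lambda>y. frechet_derivative (dds vs f) (at y) a) (at z) b"
  proof (rule schwarz[OF U z])
    show "\<And>y. y \<in> U \<Longrightarrow> dds vs f differentiable (at y)" using smooth_diff[OF sm U] by blast
    show "\<And>y. y \<in> U \<Longrightarrow> (\<lambda>y. frechet_derivative (dds vs f) (at y) b) differentiable (at y)"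
      using smooth_diff[OF sm U, of _ "b # vs"] by simp
    show "\<And>y. y \<in> U \<Longrightarrow> (\<lambda>y. frechet_derivative (dds vs f) (at y) a) differentiable (at y)"
      using smooth_diff[OF sm U, of _ "a # vs"] by simp
    show "continuous_on U (\<lambda>y. frechet_derivative (\<lambda>y. frechet_derivative (dds vs f) (at y) b) (at y) a)"
      using smooth_cont[OF sm, of "a # b # vs"] by simp
    show "continuous_on U (\<lambda>y. frechet_derivative (\<lambda>y. frechet_derivative (dds vs f) (at y) a) (at y) b)"
      using smooth_cont[OF sm, of "b # a # vs"] by simp
  qed
  then show ?thesis by simp
qed

lemma dds_sym2:
  fixes f :: "'v::real_normed_vector \<Rightarrow> real"
  assumes sm: "smooth_on U f" and U: "open U" and z: "z \<in> U"
  shows "dds (c # a # b # vs) f z = dds (c # b # a # vs) f z"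
proof -
  have "dds (c # a # b # vs) f z = frechet_derivative (dds (a # b # vs) f) (at z) c" by simp
  also have "\<dots> = frechet_derivative (dds (b # a # vs) f) (at z) c"
    using fd_local[OF U z, of "dds (a # b # vs) f" "dds (b # a # vs) f"] dds_sym[OF sm U] by auto
  finally show ?thesis by simp
qed

lemma closure_eq:
  fixes f g :: "'a::metric_space \<Rightarrow> 'b::t2_space"
  assumes S: "open S" "closure A \<subseteq> S" and cf: "continuous_on S f" and cg: "continuous_on S g"
    and eq: "\<And>y. y \<in> A \<Longrightarrow> f y = g y" and x: "x \<in> closure A"
  shows "f x = g x"
proof -
  obtain X where X: "\<And>n. X n \<in> A" "X \<longlonglongrightarrow> x" using x unfolding closure_sequential by blast
  have xS: "x \<in> S" using x S by auto
  have "isCont f x" "isCont g x" using cf cg S(1) xS continuous_on_eq_continuous_at by blast+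
  then have "(\<lambda>n. f (X n)) \<longlonglongrightarrow> f x" "(\<lambda>n. g (X n)) \<longlonglongrightarrow> g x"
    using X(2) isCont_tendsto_compose by blast+
  moreover have "(\<lambda>n. f (X n)) = (\<lambda>n. g (X n))" using eq X(1) by auto
  ultimately show ?thesis using LIMSEQ_unique by metis
qed

lemma dvg_grad:
  fixes f :: "'a::euclidean_space \<Rightarrow> real"
  assumes "\<And>c. c \<in> Basis \<Longrightarrow> (\<lambda>y. frechet_derivative f (at y) c) differentiable (at x)"
  shows "dvg (grad f) x = lap f x"
proof -
  have "dvg (grad f) x = (\<Sum>b\<in>Basis. frechet_derivative (\<lambda>y. \<Sum>c\<in>Basis. frechet_derivative f (at y) c *\<^sub>R c) (at x) b \<bullet> b)"
    unfolding dvg_def grad_def[abs_def] by simp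
  also have "\<dots> = (\<Sum>b\<in>Basis. (\<Sum>c\<in>Basis. frechet_derivative (\<lambda>y. frechet_derivative f (at y) c *\<^sub>R c) (at x) b) \<bullet> b)"
  proof (intro sum.cong refl arg_cong2[where f = inner])
    fix b :: 'a assume "b \<in> Basis"
    show "frechet_derivative (\<lambda>y. \<Sum>c\<in>Basis. frechet_derivative f (at y) c *\<^sub>R c) (at x) b =
        (\<Sum>c\<in>Basis. frechet_derivative (\<lambda>y. frechet_derivative f (at y) c *\<^sub>R c) (at x) b)"
      by (rule fd_sum) (auto intro: assms differentiable_scaleR)
  qed
  also have "\<dots> = (\<Sum>b\<in>Basis. (\<Sum>c\<in>Basis. frechet_derivative (\<lambda>y. frechet_derivative f (at y) c) (at x) b *\<^sub>R c) \<bullet> b)"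
  proof -
    have "frechet_derivative (\<lambda>y. frechet_derivative f (at y) c *\<^sub>R c) (at x) b = frechet_derivative (\<lambda>y. frechet_derivative f (at y) c) (at x) b *\<^sub>R c"
      if "c \<in> Basis" for b c
    proof -
      have "((\<lambda>y. frechet_derivative f (at y) c *\<^sub>R c) has_derivative (\<lambda>v. frechet_derivative (\<lambda>y. frechet_derivative f (at y) c) (at x) v *\<^sub>R c)) (at x)"
        using fd_works[OF assms[OF that]] by (rule has_derivative_scaleR_left)
      then show ?thesis by (simp add: frechet_derivative_at[symmetric])
    qed
    then show ?thesis by simp
  qed
  also have "\<dots> = (\<Sum>b\<in>Basis. frechet_derivative (\<lambda>y. frechet_derivative f (at y) b) (at x) b)"
    by (simp add: inner_sum_left inner_Basis if_distrib cong: if_cong)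
  finally show ?thesis unfolding lap_def .
qed



lemma heat_max:
  fixes d :: "'a::euclidean_space \<times> real \<Rightarrow> real" and \<Omega> :: "'a set"
  assumes op: "open \<Omega>" and cpt: "compact (closure \<Omega>)"
    and U: "open U" "closure \<Omega> \<times> {t0..} \<subseteq> U"
    and dd: "\<And>z. z \<in> U \<Longrightarrow> d differentiable (at z)"
    and dd1: "\<And>z v. z \<in> U \<Longrightarrow> (\<lambda>y. frechet_derivative d (at y) v) differentiable (at z)"
    and cd: "continuous_on U d"
    and bnd: "\<And>x t. x \<in> frontier \<Omega> \<Longrightarrow> t \<ge> t0 \<Longrightarrow> d (x, t) \<le> 0"
    and ini: "\<And>x. x \<in> closure \<Omega> \<Longrightarrow> d (x, t0) \<le> 0"
    and pde: "\<And>x t. x \<in> \<Omega> \<Longrightarrow> t > t0 \<Longrightarrow> frechet_derivative d (at (x, t)) (0, 1) =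
        \<nu> * (\<Sum>c\<in>Basis. frechet_derivative (\<lambda>y. frechet_derivative d (at y) (c, 0)) (at (x, t)) (c, 0))"
    and \<nu>: "\<nu> > 0"
  shows "\<And>x t. x \<in> closure \<Omega> \<Longrightarrow> t \<ge> t0 \<Longrightarrow> d (x, t) \<le> 0"
proof (rule ccontr)
  fix x1 t1 assume x1: "x1 \<in> closure \<Omega>" and t1: "t1 \<ge> t0" and "\<not> d (x1, t1) \<le> 0"
  then have d1: "d (x1, t1) > 0" by simp
  have t1': "t1 > t0" using ini[OF x1] d1 t1 by (cases "t1 = t0") auto
  define K where "K = closure \<Omega> \<times> {t0..t1}"
  have compK: "compact K" unfolding K_def using cpt by (intro compact_Times) auto
  have KU: "K \<subseteq> U" using U(2) unfolding K_def by auto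
  define \<epsilon> where "\<epsilon> = d (x1, t1) / (2 * (t1 - t0 + 1))"
  have \<epsilon>: "\<epsilon> > 0" unfolding \<epsilon>_def using d1 t1 by simp
  define w where "w z = d z - \<epsilon> * (snd z - t0)" for z
  have contw: "continuous_on K w" unfolding w_def
    by (intro continuous_intros continuous_on_subset[OF cd KU])
  have x1K: "(x1, t1) \<in> K" unfolding K_def using x1 t1 by auto
  obtain zm where zm: "zm \<in> K" "\<And>z. z \<in> K \<Longrightarrow> w z \<le> w zm"
    using continuous_attains_sup[OF compK _ contw] x1K by blast
  obtain xm tm where zmd: "zm = (xm, tm)" by (cases zm)
  have xmc: "xm \<in> closure \<Omega>" and tm: "t0 \<le> tm" "tm \<le> t1" using zm(1) unfolding zmd K_def by auto
  have wpos: "w zm > 0"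
  proof -
    have "\<epsilon> * (t1 - t0) < d (x1, t1) / 2"
    proof -
      have "\<epsilon> * (t1 - t0) = d (x1, t1) * ((t1 - t0) / (2 * (t1 - t0 + 1)))" unfolding \<epsilon>_def by simp
      also have "\<dots> < d (x1, t1) * (1 / 2)"
        using d1 t1 by (intro mult_strict_left_mono) (auto simp: field_simps)
      finally show ?thesis by simp
    qed
    then have "w (x1, t1) > 0" unfolding w_def using d1 by simp
    then show ?thesis using zm(2)[OF x1K] by simp
  qed
  have tm': "tm > t0"
  proof (rule ccontr)
    assume "\<not> tm > t0" then have "tm = t0" using tm by simp
    then have "w zm = d (xm, t0)" unfolding w_def zmd by simp
    then show False using ini[OF xmc] wpos by simp
  qed
  have xmO: "xm \<in> \<Omega>"
  proof (rule ccontr)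
    assume "xm \<notin> \<Omega>"
    then have "xm \<in> frontier \<Omega>" using xmc op by (simp add: frontier_def interior_open)
    then have "d (xm, tm) \<le> 0" using bnd tm by simp
    moreover have "\<epsilon> * (tm - t0) \<ge> 0" using \<epsilon> tm by simp
    ultimately have "w zm \<le> 0" unfolding w_def zmd by simp
    then show False using wpos by simp
  qed
  have zmU: "(xm, tm) \<in> U" using zm(1) KU zmd by auto
  have time: "frechet_derivative d (at (xm, tm)) (0, 1) - \<epsilon> \<ge> 0"
  proof -
    define g where "g s = d (xm, tm + s) - \<epsilon> * (tm + s - t0)" for s
    have l: "DERIV (\<lambda>s. d (xm, tm + s)) 0 :> frechet_derivative d (at (xm, tm)) (0, 1)"
      using line_deriv_real[of d "(xm, tm)" 0 "(0, 1)"] dd[OF zmU] by simp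
    have q: "DERIV (\<lambda>s. \<epsilon> * (tm + s - t0)) 0 :> \<epsilon> * 1"
      by (auto intro!: derivative_eq_intros)
    have dg: "DERIV g 0 :> frechet_derivative d (at (xm, tm)) (0, 1) - \<epsilon> * 1"
      unfolding g_def by (rule DERIV_diff[OF l q])
    have "g (- h) \<le> g 0" if "0 < h" "h < tm - t0" for h
    proof -
      have "(xm, tm - h) \<in> K" unfolding K_def using xmc that tm by auto
      then have "w (xm, tm - h) \<le> w zm" by (rule zm(2))
      then show ?thesis unfolding g_def w_def zmd by simp
    qed
    then have "frechet_derivative d (at (xm, tm)) (0, 1) - \<epsilon> * 1 \<ge> 0"
      using left_max_deriv[OF dg, of "tm - t0"] tm' by simp
    then show ?thesis by simp
  qed
  obtain \<delta> where \<delta>: "\<delta> > 0" "ball xm \<delta> \<subseteq> \<Omega>" using op xmO openE by blast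
  have space: "frechet_derivative (\<lambda>y. frechet_derivative d (at y) (c, 0)) (at (xm, tm)) (c, 0) \<le> 0"
    if c: "c \<in> Basis" for c
  proof -
    have nc: "norm c = 1" using c by simp
    have inK: "(xm + s *\<^sub>R c, tm) \<in> K" if "\<bar>s\<bar> < \<delta>" for s
    proof -
      have "xm + s *\<^sub>R c \<in> ball xm \<delta>" using that nc by (simp add: dist_norm)
      then have "xm + s *\<^sub>R c \<in> closure \<Omega>" using \<delta>(2) closure_subset by blast
      then show ?thesis using tm unfolding K_def by auto
    qed
    have pt: "(xm, tm) + s *\<^sub>R (c, 0) = (xm + s *\<^sub>R c, tm)" for s by simp
    define f where "f s = d ((xm, tm) + s *\<^sub>R (c, 0))" for s
    define f' where "f' s = frechet_derivative d (at ((xm, tm) + s *\<^sub>R (c, 0))) (c, 0)" for s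
    have df: "DERIV f s :> f' s" if "\<bar>s\<bar> < \<delta>" for s
      unfolding f_def f'_def
      by (rule line_deriv_real) (use dd inK[OF that] KU pt in auto)
    have df': "DERIV f' 0 :> frechet_derivative (\<lambda>y. frechet_derivative d (at y) (c, 0)) (at (xm, tm)) (c, 0)"
      unfolding f'_def
      using line_deriv_real[of "\<lambda>y. frechet_derivative d (at y) (c, 0)" "(xm, tm)" 0 "(c, 0)"] dd1[OF zmU]
      by simp
    have mx: "f s \<le> f 0" if "\<bar>s\<bar> < \<delta>" for s
    proof -
      have "w (xm + s *\<^sub>R c, tm) \<le> w zm" by (rule zm(2)[OF inK[OF that]])
      then show ?thesis unfolding f_def w_def zmd pt by simp
    qed
    show ?thesis by (rule second_deriv_max[OF \<delta>(1) df df' mx])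
  qed
  have "(\<Sum>c\<in>Basis. frechet_derivative (\<lambda>y. frechet_derivative d (at y) (c, 0)) (at (xm, tm)) (c, 0)) \<le> 0"
    using space by (intro sum_nonpos) auto
  then have "frechet_derivative d (at (xm, tm)) (0, 1) \<le> 0"
    using pde[OF xmO tm'] \<nu> by (simp add: mult_nonneg_nonpos)
  then show False using time \<epsilon> by simp
qed



lemma diff_slice:
  fixes F :: "'a::real_normed_vector \<times> real \<Rightarrow> 'b::real_normed_vector"
  assumes "smooth_on U F" "open U" "(x, t) \<in> U"
  shows "(\<lambda>y. dds vs F (y, t)) differentiable (at x)"
  by (rule slice_diff[OF smooth_diff[OF assms]])

lemma cont_slice:
  fixes F :: "'a::real_normed_vector \<times> real \<Rightarrow> 'b::real_normed_vector"
  assumes "smooth_on U F"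
  shows "continuous_on {y. (y, t) \<in> U} (\<lambda>y. dds vs F (y, t))"
proof -
  have c1: "continuous_on {y. (y, t) \<in> U} (\<lambda>y. (y, t))" by (intro continuous_intros)
  have c2: "continuous_on U (dds vs F)" by (rule smooth_cont[OF assms])
  show ?thesis by (rule continuous_on_compose2[OF c2 c1]) auto
qed

lemma fd_slice1:
  fixes F :: "'a::real_normed_vector \<times> real \<Rightarrow> 'b::real_normed_vector"
  assumes "smooth_on U F" "open U" "(x, t) \<in> U"
  shows "frechet_derivative (\<lambda>y. F (y, t)) (at x) v = dds [(v, 0)] F (x, t)"
  using dds_slice[OF assms(1,2,3), of "[v]"] by simp

lemma fd_slice2:
  fixes F :: "'a::real_normed_vector \<times> real \<Rightarrow> 'b::real_normed_vector"
  assumes "smooth_on U F" "open U" "(x, t) \<in> U"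
  shows "frechet_derivative (\<lambda>y. frechet_derivative (\<lambda>y. F (y, t)) (at y) u) (at x) v = dds [(v, 0), (u, 0)] F (x, t)"
  using dds_slice[OF assms(1,2,3), of "[v, u]"] by simp

lemma dds_cons_slice:
  fixes F :: "'a::real_normed_vector \<times> real \<Rightarrow> 'b::real_normed_vector"
  assumes "smooth_on U F" "open U" "(x, t) \<in> U"
  shows "frechet_derivative (\<lambda>y. dds vs F (y, t)) (at x) v = dds ((v, 0) # vs) F (x, t)"
proof -
  have "frechet_derivative (\<lambda>y. dds vs F (y, t)) (at x) v = frechet_derivative (dds vs F) (at (x, t)) (v, 0)"
    by (rule slice_fd[OF smooth_diff[OF assms]])
  then show ?thesis by simp
qed

lemma lap_slice:
  fixes F :: "'a::euclidean_space \<times> real \<Rightarrow> 'b::real_normed_vector"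
  assumes "smooth_on U F" "open U" "(x, t) \<in> U"
  shows "lap (\<lambda>y. F (y, t)) x = (\<Sum>c\<in>Basis. dds [(c, 0), (c, 0)] F (x, t))"
  unfolding lap_def using fd_slice2[OF assms] by simp

lemma grad_slice:
  fixes F :: "'a::euclidean_space \<times> real \<Rightarrow> real"
  assumes "smooth_on U F" "open U" "(x, t) \<in> U"
  shows "grad (\<lambda>y. F (y, t)) x = (\<Sum>c\<in>Basis. dds [(c, 0)] F (x, t) *\<^sub>R c)"
  unfolding grad_def using fd_slice1[OF assms] by simp

lemma dvg_slice:
  fixes F :: "'a::euclidean_space \<times> real \<Rightarrow> 'a"
  assumes "smooth_on U F" "open U" "(x, t) \<in> U"
  shows "dvg (\<lambda>y. F (y, t)) x = (\<Sum>c\<in>Basis. dds [(c, 0)] F (x, t) \<bullet> c)"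
  unfolding dvg_def using fd_slice1[OF assms] by simp

lemma adv_slice:
  fixes F :: "'a::euclidean_space \<times> real \<Rightarrow> 'b::real_normed_vector"
  assumes "smooth_on U F" "open U" "(x, t) \<in> U"
  shows "advect V (\<lambda>y. F (y, t)) x = (\<Sum>c\<in>Basis. (V x \<bullet> c) *\<^sub>R dds [(c, 0)] F (x, t))"
proof -
  have lin: "linear (frechet_derivative F (at (x, t)))" by (rule fd_linear[OF smooth_diff[OF assms, of "[]"], simplified])
  have "advect V (\<lambda>y. F (y, t)) x = frechet_derivative F (at (x, t)) (V x, 0)"
    unfolding advect_def using fd_slice1[OF assms] by simp
  also have "(V x, 0::real) = (\<Sum>c\<in>Basis. (V x \<bullet> c) *\<^sub>R (c, 0::real))"
    by (simp add: sum_prod euclidean_representation)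
  also have "frechet_derivative F (at (x, t)) (\<Sum>c\<in>Basis. (V x \<bullet> c) *\<^sub>R (c, 0::real)) =
      (\<Sum>c\<in>Basis. (V x \<bullet> c) *\<^sub>R frechet_derivative F (at (x, t)) (c, 0))"
    by (simp only: linear_sum[OF lin] linear_scale[OF lin] o_def)
  finally show ?thesis by simp
qed

lemma tderiv_slice:
  fixes F :: "'a::real_normed_vector \<times> real \<Rightarrow> 'b::real_normed_vector"
  assumes "smooth_on U F" "open U" "(x, t) \<in> U"
  shows "tderiv (\<lambda>y s. F (y, s)) x t = dds [(0, 1)] F (x, t)"
  unfolding tderiv_def using tslice[OF smooth_diff[OF assms, of "[]"], simplified]
  by (simp add: vector_derivative_at)

lemma dvg_comb:
  fixes A B C :: "'a::euclidean_space \<Rightarrow> 'a"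
  assumes "A differentiable (at x)" "B differentiable (at x)" "C differentiable (at x)"
  shows "dvg (\<lambda>y. A y - B y + c *\<^sub>R C y) x = dvg A x - dvg B x + c * dvg C x"
proof -
  have "frechet_derivative (\<lambda>y. A y - B y + c *\<^sub>R C y) (at x) b =
      frechet_derivative A (at x) b - frechet_derivative B (at x) b + c *\<^sub>R frechet_derivative C (at x) b" for b
  proof -
    have "((\<lambda>y. A y - B y + c *\<^sub>R C y) has_derivative
        (\<lambda>b. frechet_derivative A (at x) b - frechet_derivative B (at x) b + c *\<^sub>R frechet_derivative C (at x) b)) (at x)"
      using fd_works[OF assms(1)] fd_works[OF assms(2)] fd_works[OF assms(3)]
      by (intro has_derivative_add has_derivative_diff has_derivative_scaleR_right)
    then show ?thesis by (simp add: frechet_derivative_at[symmetric])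
  qed
  then show ?thesis unfolding dvg_def
    by (simp add: inner_diff_left inner_add_left sum.distrib sum_subtractf sum_distrib_left)
qed

lemma dvg_diff2:
  fixes A B :: "'a::euclidean_space \<Rightarrow> 'a"
  assumes "A differentiable (at x)" "B differentiable (at x)"
  shows "dvg (\<lambda>y. A y - B y) x = dvg A x - dvg B x"
  using dvg_comb[OF assms assms(1), of 0] by simp

lemma dvg_local:
  assumes "open S" "x \<in> S" "\<And>y. y \<in> S \<Longrightarrow> f y = g y"
  shows "dvg f x = dvg g x"
  unfolding dvg_def using fd_local[OF assms] by simp

lemma lap_local:
  assumes "open S" "x \<in> S" "\<And>y. y \<in> S \<Longrightarrow> f y = g y"
  shows "lap f x = lap g x"
proof -
  have "frechet_derivative (\<lambda>y. frechet_derivative f (at y) b) (at x) = frechet_derivative (\<lambda>y. frechet_derivative g (at y) b) (at x)" for b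
    by (rule fd_local[OF assms(1,2)]) (use fd_local[OF assms(1) _ assms(3)] in simp)
  then show ?thesis unfolding lap_def by simp
qed

lemma grad_diff:
  fixes f :: "'a::euclidean_space \<Rightarrow> real"
  assumes "\<And>c. c \<in> Basis \<Longrightarrow> (\<lambda>y. frechet_derivative f (at y) c) differentiable (at x)"
  shows "grad f differentiable (at x)"
  unfolding grad_def[abs_def] by (intro diff_sum differentiable_scaleR assms differentiable_const)



lemma not_bot_Ici: "t0 \<le> (t::real) \<Longrightarrow> at t within {t0..} \<noteq> bot"
proof
  assume t: "t0 \<le> t" and b: "at t within {t0..} = bot"
  have "at t within {t..} \<le> at t within {t0..}" using t by (intro at_le) auto
  then have "at_right t \<le> bot" using b by (simp add: at_within_Ici_at_right)
  then have "at_right t = bot" using bot_unique by blast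
  then show False using trivial_limit_at_right_real[of t] by simp
qed

theorem lemma6:
  fixes \<Omega> :: "'a::euclidean_space set" and \<rho> :: "'a \<Rightarrow> real" and n :: "'a \<Rightarrow> 'a"
    and w u g :: "'a \<Rightarrow> real \<Rightarrow> 'a" and q :: "'a \<Rightarrow> real \<Rightarrow> real"
    and \<nu> lam t0 :: real and U :: "('a \<times> real) set"
  assumes dim: "DIM('a) \<ge> 2"
    and dom: "smooth_domain \<Omega> \<rho>"
    and normal: "\<forall>x\<in>frontier \<Omega>. n x = outward_normal \<rho> x"
    and nu: "\<nu> > 0" and lam: "lam \<ge> 0"
    and U: "open U" "closure \<Omega> \<times> {t0..} \<subseteq> U"
    and smooth: "smooth_on U (\<lambda>z. w (fst z) (snd z))" "smooth_on U (\<lambda>z. u (fst z) (snd z))"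
      "smooth_on U (\<lambda>z. q (fst z) (snd z))" "smooth_on U (\<lambda>z. g (fst z) (snd z))"
    and evol: "\<forall>t\<ge>t0. \<forall>x\<in>\<Omega>. tderiv w x t =
        g x t - advect (\<lambda>y. u y t) (\<lambda>y. u y t) x - grad (\<lambda>y. q y t) x + \<nu> *\<^sub>R lap (\<lambda>y. w y t) x"
    and w_bc: "\<forall>t\<ge>t0. \<forall>x\<in>frontier \<Omega>. (\<forall>\<tau>. \<tau> \<bullet> n x = 0 \<longrightarrow> w x t \<bullet> \<tau> = 0) \<and> dvg (\<lambda>y. w y t) x = 0"
    and proj: "\<forall>t\<ge>t0. leray_proj \<Omega> n (\<lambda>y. w y t) (\<lambda>y. u y t)"
    and u_bc: "\<forall>t\<ge>t0. \<forall>x\<in>frontier \<Omega>. u x t \<bullet> n x = 0"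
    and q_eq: "\<forall>t\<ge>t0. \<forall>x\<in>\<Omega>. lap (\<lambda>y. q y t) x =
        dvg (\<lambda>y. g y t - advect (\<lambda>z. u z t) (\<lambda>z. u z t) y) x"
    and q_bc: "\<forall>t\<ge>t0. \<forall>x\<in>frontier \<Omega>. n x \<bullet> grad (\<lambda>y. q y t) x =
        n x \<bullet> (g x t - advect (\<lambda>y. u y t) (\<lambda>y. u y t) x + \<nu> *\<^sub>R lap (\<lambda>y. w y t) x) + lam * (n x \<bullet> w x t)"
    and init: "\<forall>x\<in>closure \<Omega>. w x t0 = u x t0"
  shows "(\<forall>t\<ge>t0. \<forall>x\<in>closure \<Omega>. w x t = u x t) \<and>
         (\<forall>t\<ge>t0. \<forall>x\<in>\<Omega>.
            tderiv u x t + advect (\<lambda>y. u y t) (\<lambda>y. u y t) x =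
              g x t - grad (\<lambda>y. q y t) x + \<nu> *\<^sub>R lap (\<lambda>y. u y t) x \<and>
            dvg (\<lambda>y. u y t) x = 0) \<and>
         (\<forall>t\<ge>t0. \<forall>x\<in>frontier \<Omega>. u x t = 0)"
proof -
  define Wj where "Wj = (\<lambda>z. w (fst z) (snd z))"
  define Uj where "Uj = (\<lambda>z. u (fst z) (snd z))"
  define Qj where "Qj = (\<lambda>z. q (fst z) (snd z))"
  define Gj where "Gj = (\<lambda>z. g (fst z) (snd z))"
  have smW: "smooth_on U Wj" using smooth(1) unfolding Wj_def .
  have smU: "smooth_on U Uj" using smooth(2) unfolding Uj_def .
  have smQ: "smooth_on U Qj" using smooth(3) unfolding Qj_def .
  have smG: "smooth_on U Gj" using smooth(4) unfolding Gj_def .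
  note Uo = U(1)
  have wsl: "\<And>t. (\<lambda>y. w y t) = (\<lambda>y. Wj (y, t))" by (simp add: Wj_def)
  have usl: "\<And>t. (\<lambda>y. u y t) = (\<lambda>y. Uj (y, t))" by (simp add: Uj_def)
  have qsl: "\<And>t. (\<lambda>y. q y t) = (\<lambda>y. Qj (y, t))" by (simp add: Qj_def)
  have gsl: "\<And>t. (\<lambda>y. g y t) = (\<lambda>y. Gj (y, t))" by (simp add: Gj_def)
  have wts: "w = (\<lambda>y s. Wj (y, s))" by (simp add: Wj_def)
  have uts: "u = (\<lambda>y s. Uj (y, s))" by (simp add: Uj_def)
  have inU: "\<And>x t. x \<in> closure \<Omega> \<Longrightarrow> t \<ge> t0 \<Longrightarrow> (x, t) \<in> U" using U(2) by auto
  have op: "open \<Omega>" by (rule dom_open[OF dom])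
  have cpt: "compact (closure \<Omega>)" by (rule dom_compact[OF dom])
  have \<Omega>U: "\<And>x t. x \<in> \<Omega> \<Longrightarrow> t \<ge> t0 \<Longrightarrow> (x, t) \<in> U" using inU closure_subset by blast
  have SLo: "\<And>t. open {y. (y, t) \<in> U}" using slice_open[OF Uo] by blast
  have SLc: "\<And>t. t \<ge> t0 \<Longrightarrow> closure \<Omega> \<subseteq> {y. (y, t) \<in> U}" using inU by blast
  have fr_cl: "frontier \<Omega> \<subseteq> closure \<Omega>" by (simp add: frontier_def)
  have proj_obt: "\<exists>\<phi> :: 'a \<Rightarrow> real. \<exists>V. open V \<and> closure \<Omega> \<subseteq> V \<and> Ck_on 2 V \<phi> \<and>
       (\<forall>x\<in>\<Omega>. lap \<phi> x = dvg (\<lambda>y. w y t) x) \<and>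
       (\<forall>x\<in>frontier \<Omega>. n x \<bullet> grad \<phi> x = n x \<bullet> w x t) \<and>
       (\<forall>x\<in>\<Omega>. u x t = w x t - grad \<phi> x)" if t: "t \<ge> t0" for t
    using proj t unfolding leray_proj_def by simp
  have dvu: "dvg (\<lambda>y. u y t) x = 0" if t: "t \<ge> t0" and x: "x \<in> \<Omega>" for t x
  proof -
    obtain \<phi> :: "'a \<Rightarrow> real" and V where V: "open V" "closure \<Omega> \<subseteq> V" "Ck_on 2 V \<phi>"
      and l\<phi>: "\<forall>x\<in>\<Omega>. lap \<phi> x = dvg (\<lambda>y. w y t) x"
      and ue: "\<forall>x\<in>\<Omega>. u x t = w x t - grad \<phi> x"
      using proj_obt[OF t] by blast
    have xV: "x \<in> V" using x V(2) closure_subset by blast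
    have "dvg (\<lambda>y. u y t) x = dvg (\<lambda>y. w y t - grad \<phi> y) x"
      by (rule dvg_local[OF op x]) (use ue in auto)
    also have "\<dots> = dvg (\<lambda>y. w y t) x - dvg (grad \<phi>) x"
    proof (rule dvg_diff2)
      show "(\<lambda>y. w y t) differentiable (at x)"
        unfolding wsl using diff_slice[OF smW Uo \<Omega>U[OF x t], of "[]"] by simp
      show "grad \<phi> differentiable (at x)"
        by (rule grad_diff) (rule C2_d1[OF V(3) V(1) xV])
    qed
    also have "dvg (grad \<phi>) x = lap \<phi> x"
      by (rule dvg_grad) (rule C2_d1[OF V(3) V(1) xV])
    finally show ?thesis using l\<phi> x by simp
  qed
  define Wc where "Wc b = (\<lambda>z. Wj z \<bullet> b)" for b
  have smWc: "smooth_on U (Wc b)" for b unfolding Wc_def by (rule smooth_inner[OF smW Uo])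
  have Wcd: "dds vs (Wc b) z = dds vs Wj z \<bullet> b" if "z \<in> U" for vs b z
    unfolding Wc_def by (rule dds_inner[OF smW Uo that])
  define d where "d z = (\<Sum>b\<in>Basis. dds [(b, 0)] (Wc b) z)" for z
  have d_dvg: "d (x, t) = dvg (\<lambda>y. w y t) x" if "(x, t) \<in> U" for x t
    unfolding d_def wsl dvg_slice[OF smW Uo that] using Wcd[OF that] by (simp del: dds.simps)
  have dfd: "frechet_derivative d (at z) v = (\<Sum>b\<in>Basis. dds [v, (b, 0)] (Wc b) z)" if z: "z \<in> U" for z v
  proof -
    have "frechet_derivative d (at z) v = (\<Sum>b\<in>Basis. frechet_derivative (dds [(b, 0)] (Wc b)) (at z) v)"
      unfolding d_def[abs_def] by (rule fd_sum[OF finite_Basis]) (rule smooth_diff[OF smWc Uo z])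
    then show ?thesis by simp
  qed
  have dd: "d differentiable (at z)" if z: "z \<in> U" for z
    unfolding d_def[abs_def] by (rule diff_sum) (rule smooth_diff[OF smWc Uo z])
  have dd1: "(\<lambda>y. frechet_derivative d (at y) v) differentiable (at z)" if z: "z \<in> U" for z v
  proof (rule diff_local[OF Uo z])
    show "\<And>y. y \<in> U \<Longrightarrow> frechet_derivative d (at y) v = (\<Sum>b\<in>Basis. dds [v, (b, 0)] (Wc b) y)" by (rule dfd)
    show "(\<lambda>y. \<Sum>b\<in>Basis. dds [v, (b, 0)] (Wc b) y) differentiable (at z)"
      by (rule diff_sum) (rule smooth_diff[OF smWc Uo z])
  qed
  have cd: "continuous_on U d"
    unfolding d_def[abs_def] by (intro continuous_on_sum smooth_cont[OF smWc])
  have d2fd: "frechet_derivative (\<lambda>y. frechet_derivative d (at y) v) (at z) u' = (\<Sum>b\<in>Basis. dds [u', v, (b, 0)] (Wc b) z)"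
    if z: "z \<in> U" for z u' v
  proof -
    have "frechet_derivative (\<lambda>y. frechet_derivative d (at y) v) (at z) u' =
        frechet_derivative (\<lambda>y. \<Sum>b\<in>Basis. dds [v, (b, 0)] (Wc b) y) (at z) u'"
      using fd_local[OF Uo z, of "\<lambda>y. frechet_derivative d (at y) v" "\<lambda>y. \<Sum>b\<in>Basis. dds [v, (b, 0)] (Wc b) y"] dfd
      by simp
    also have "\<dots> = (\<Sum>b\<in>Basis. frechet_derivative (dds [v, (b, 0)] (Wc b)) (at z) u')"
      by (rule fd_sum[OF finite_Basis]) (rule smooth_diff[OF smWc Uo z])
    finally show ?thesis by simp
  qed
  have pde: "frechet_derivative d (at (x, t)) (0, 1) =
      \<nu> * (\<Sum>c\<in>Basis. frechet_derivative (\<lambda>y. frechet_derivative d (at y) (c, 0)) (at (x, t)) (c, 0))"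
    if x: "x \<in> \<Omega>" and t: "t \<ge> t0" for x t
  proof -
    have z: "(x, t) \<in> U" by (rule \<Omega>U[OF x t])
    have xS: "x \<in> {y. (y, t) \<in> U}" using z by simp
    define A where "A y = g y t - advect (\<lambda>y. u y t) (\<lambda>y. u y t) y" for y
    define B where "B = grad (\<lambda>y. q y t)"
    define C where "C = lap (\<lambda>y. w y t)"
    define R where "R y = A y - B y + \<nu> *\<^sub>R C y" for y
    have dA: "A differentiable (at x)"
    proof -
      have "(\<lambda>y. g y t) differentiable (at x)"
        unfolding gsl using diff_slice[OF smG Uo z, of "[]"] by simp
      moreover have "(\<lambda>y. advect (\<lambda>y. u y t) (\<lambda>y. u y t) y) differentiable (at x)"
      proof (rule diff_local[OF SLo xS])
        show "\<And>y. y \<in> {y. (y, t) \<in> U} \<Longrightarrow> advect (\<lambda>y. u y t) (\<lambda>y. u y t) y =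
            (\<Sum>c\<in>Basis. (Uj (y, t) \<bullet> c) *\<^sub>R dds [(c, 0)] Uj (y, t))"
          unfolding usl using adv_slice[OF smU Uo] by simp
        have "(\<lambda>y. Uj (y, t)) differentiable (at x)" using diff_slice[OF smU Uo z, of "[]"] by simp
        then show "(\<lambda>y. \<Sum>c\<in>Basis. (Uj (y, t) \<bullet> c) *\<^sub>R dds [(c, 0)] Uj (y, t)) differentiable (at x)"
          by (intro diff_sum differentiable_scaleR differentiable_inner differentiable_const diff_slice[OF smU Uo z])
      qed
      ultimately show ?thesis unfolding A_def[abs_def] by (rule differentiable_diff)
    qed
    have dq1: "(\<lambda>y. frechet_derivative (\<lambda>y. q y t) (at y) c) differentiable (at x)" for c
    proof (rule diff_local[OF SLo xS])
      show "\<And>y. y \<in> {y. (y, t) \<in> U} \<Longrightarrow> frechet_derivative (\<lambda>y. q y t) (at y) c = dds [(c, 0)] Qj (y, t)"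
        unfolding qsl using fd_slice1[OF smQ Uo] by simp
      show "(\<lambda>y. dds [(c, 0)] Qj (y, t)) differentiable (at x)" by (rule diff_slice[OF smQ Uo z])
    qed
    have dB: "B differentiable (at x)" unfolding B_def by (rule grad_diff[OF dq1])
    have Ceq: "C y = (\<Sum>c\<in>Basis. dds [(c, 0), (c, 0)] Wj (y, t))" if "y \<in> {y. (y, t) \<in> U}" for y
      unfolding C_def wsl using lap_slice[OF smW Uo] that by simp
    have dC: "C differentiable (at x)"
    proof (rule diff_local[OF SLo xS])
      show "\<And>y. y \<in> {y. (y, t) \<in> U} \<Longrightarrow> C y = (\<Sum>c\<in>Basis. dds [(c, 0), (c, 0)] Wj (y, t))" by (rule Ceq)
      show "(\<lambda>y. \<Sum>c\<in>Basis. dds [(c, 0), (c, 0)] Wj (y, t)) differentiable (at x)"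
        by (rule diff_sum) (rule diff_slice[OF smW Uo z])
    qed
    have dR: "R differentiable (at x)"
      unfolding R_def[abs_def] using dA dB dC by (intro differentiable_add differentiable_diff differentiable_scaleR differentiable_const)
    have T1: "frechet_derivative d (at (x, t)) (0, 1) = (\<Sum>b\<in>Basis. frechet_derivative (\<lambda>y. R y \<bullet> b) (at x) b)"
    proof -
      have "frechet_derivative d (at (x, t)) (0, 1) = (\<Sum>b\<in>Basis. dds [(0, 1), (b, 0)] (Wc b) (x, t))"
        by (rule dfd[OF z])
      also have "\<dots> = (\<Sum>b\<in>Basis. frechet_derivative (\<lambda>y. R y \<bullet> b) (at x) b)"
      proof (rule sum.cong[OF refl])
        fix b :: 'a assume b: "b \<in> Basis"
        have "dds [(0, 1), (b, 0)] (Wc b) (x, t) = dds [(b, 0), (0, 1)] (Wc b) (x, t)"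
          by (rule dds_sym[OF smWc Uo z])
        also have "\<dots> = frechet_derivative (dds [(0, 1)] (Wc b)) (at (x, t)) (b, 0)" by (simp only: dds.simps(2))
        also have "\<dots> = frechet_derivative (\<lambda>y. dds [(0, 1)] (Wc b) (y, t)) (at x) b"
          by (rule slice_fd[OF smooth_diff[OF smWc Uo z], symmetric])
        also have "\<dots> = frechet_derivative (\<lambda>y. R y \<bullet> b) (at x) b"
        proof -
          have "dds [(0, 1)] (Wc b) (y, t) = R y \<bullet> b" if y: "y \<in> \<Omega>" for y
          proof -
            have yz: "(y, t) \<in> U" by (rule \<Omega>U[OF y t])
            have "dds [(0, 1)] (Wc b) (y, t) = dds [(0, 1)] Wj (y, t) \<bullet> b" by (rule Wcd[OF yz])
            also have "dds [(0, 1)] Wj (y, t) = tderiv w y t"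
              unfolding wts by (rule tderiv_slice[OF smW Uo yz, symmetric])
            also have "tderiv w y t = R y"
              using evol t y unfolding R_def A_def B_def C_def by simp
            finally show ?thesis .
          qed
          then show ?thesis using fd_local[OF op x, of "\<lambda>y. dds [(0, 1)] (Wc b) (y, t)" "\<lambda>y. R y \<bullet> b"] by simp
        qed
        finally show "dds [(0, 1), (b, 0)] (Wc b) (x, t) = frechet_derivative (\<lambda>y. R y \<bullet> b) (at x) b" .
      qed
      finally show ?thesis .
    qed
    have T2: "(\<Sum>b\<in>Basis. frechet_derivative (\<lambda>y. R y \<bullet> b) (at x) b) = dvg R x"
      unfolding dvg_def using fd_inner[OF dR] by simp
    have T3: "dvg R x = dvg A x - dvg B x + \<nu> * dvg C x"
      unfolding R_def[abs_def] by (rule dvg_comb[OF dA dB dC])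
    have T4: "dvg B x = dvg A x"
    proof -
      have "dvg B x = lap (\<lambda>y. q y t) x" unfolding B_def by (rule dvg_grad[OF dq1])
      also have "\<dots> = dvg A x" using q_eq t x unfolding A_def[abs_def] by simp
      finally show ?thesis .
    qed
    have T5: "dvg C x = (\<Sum>b\<in>Basis. \<Sum>c\<in>Basis. dds [(b, 0), (c, 0), (c, 0)] (Wc b) (x, t))"
    proof -
      have "dvg C x = (\<Sum>b\<in>Basis. frechet_derivative (\<lambda>y. C y \<bullet> b) (at x) b)"
        unfolding dvg_def using fd_inner[OF dC] by simp
      also have "\<dots> = (\<Sum>b\<in>Basis. \<Sum>c\<in>Basis. dds [(b, 0), (c, 0), (c, 0)] (Wc b) (x, t))"
      proof (rule sum.cong[OF refl])
        fix b :: 'a assume b: "b \<in> Basis"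
        have "frechet_derivative (\<lambda>y. C y \<bullet> b) (at x) = frechet_derivative (\<lambda>y. \<Sum>c\<in>Basis. dds [(c, 0), (c, 0)] (Wc b) (y, t)) (at x)"
        proof (rule fd_local[OF SLo xS])
          fix y assume y: "y \<in> {y. (y, t) \<in> U}"
          have "C y \<bullet> b = (\<Sum>c\<in>Basis. dds [(c, 0), (c, 0)] Wj (y, t) \<bullet> b)"
            using Ceq[OF y] by (simp add: inner_sum_left del: dds.simps)
          also have "\<dots> = (\<Sum>c\<in>Basis. dds [(c, 0), (c, 0)] (Wc b) (y, t))"
            using Wcd y by (simp del: dds.simps)
          finally show "C y \<bullet> b = (\<Sum>c\<in>Basis. dds [(c, 0), (c, 0)] (Wc b) (y, t))" .
        qed
        then have "frechet_derivative (\<lambda>y. C y \<bullet> b) (at x) b =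
            frechet_derivative (\<lambda>y. \<Sum>c\<in>Basis. dds [(c, 0), (c, 0)] (Wc b) (y, t)) (at x) b"
          by (rule fun_cong)
        also have "\<dots> = (\<Sum>c\<in>Basis. frechet_derivative (\<lambda>y. dds [(c, 0), (c, 0)] (Wc b) (y, t)) (at x) b)"
          by (rule fd_sum[OF finite_Basis]) (rule diff_slice[OF smWc Uo z])
        also have "\<dots> = (\<Sum>c\<in>Basis. dds [(b, 0), (c, 0), (c, 0)] (Wc b) (x, t))"
          by (rule sum.cong[OF refl]) (rule dds_cons_slice[OF smWc Uo z])
        finally show "frechet_derivative (\<lambda>y. C y \<bullet> b) (at x) b = (\<Sum>c\<in>Basis. dds [(b, 0), (c, 0), (c, 0)] (Wc b) (x, t))" .
      qed
      finally show ?thesis .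
    qed
    have T6: "(\<Sum>c\<in>Basis. frechet_derivative (\<lambda>y. frechet_derivative d (at y) (c, 0)) (at (x, t)) (c, 0)) =
        (\<Sum>c\<in>Basis. \<Sum>b\<in>Basis. dds [(c, 0), (c, 0), (b, 0)] (Wc b) (x, t))"
      by (rule sum.cong[OF refl]) (rule d2fd[OF z])
    have T7: "dds [(b, 0), (c, 0), (c, 0)] (Wc b) (x, t) = dds [(c, 0), (c, 0), (b, 0)] (Wc b) (x, t)" for b c
      by (rule trans[OF dds_sym[OF smWc Uo z, of "(b, 0)" "(c, 0)" "[(c, 0)]"] dds_sym2[OF smWc Uo z, of "(c, 0)" "(b, 0)" "(c, 0)" "[]"]])
    have "frechet_derivative d (at (x, t)) (0, 1) = \<nu> * dvg C x"
      using T1 T2 T3 T4 by simp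
    also have "\<dots> = \<nu> * (\<Sum>c\<in>Basis. \<Sum>b\<in>Basis. dds [(c, 0), (c, 0), (b, 0)] (Wc b) (x, t))"
    proof -
      have "dvg C x = (\<Sum>b\<in>Basis. \<Sum>c\<in>Basis. dds [(c, 0), (c, 0), (b, 0)] (Wc b) (x, t))"
        unfolding T5 by (intro sum.cong refl T7)
      also have "\<dots> = (\<Sum>c\<in>Basis. \<Sum>b\<in>Basis. dds [(c, 0), (c, 0), (b, 0)] (Wc b) (x, t))"
        by (rule sum.swap)
      finally show ?thesis by simp
    qed
    finally show ?thesis using T6 by simp
  qed
  have bnd0: "d (x, t) = 0" if "x \<in> frontier \<Omega>" "t \<ge> t0" for x t
    using d_dvg[OF inU] w_bc that fr_cl by auto
  have ini0: "d (x, t0) = 0" if x: "x \<in> closure \<Omega>" for x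
  proof (cases "x \<in> \<Omega>")
    case True
    have "d (x, t0) = dvg (\<lambda>y. w y t0) x" by (rule d_dvg[OF inU[OF x]]) simp
    also have "\<dots> = dvg (\<lambda>y. u y t0) x"
      by (rule dvg_local[OF op True]) (use init closure_subset in blast)
    also have "\<dots> = 0" by (rule dvu[OF _ True]) simp
    finally show ?thesis .
  next
    case False
    then have "x \<in> frontier \<Omega>" using x op by (simp add: frontier_def interior_open)
    then show ?thesis using bnd0 by simp
  qed
  have dle: "d (x, t) \<le> 0" if "x \<in> closure \<Omega>" "t \<ge> t0" for x t
    by (rule heat_max[OF op cpt U dd dd1 cd _ _ pde nu, of x t])
      (use bnd0 ini0 that in auto)
  define nd where "nd z = - d z" for z
  have nd_fd: "frechet_derivative nd (at z) v = - frechet_derivative d (at z) v" if "z \<in> U" for z v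
    unfolding nd_def by (rule fd_uminus[OF dd[OF that]])
  have nd_d: "nd differentiable (at z)" if "z \<in> U" for z
    unfolding nd_def[abs_def] using dd[OF that] by (rule differentiable_minus)
  have nd_d1: "(\<lambda>y. frechet_derivative nd (at y) v) differentiable (at z)" if z: "z \<in> U" for z v
  proof (rule diff_local[OF Uo z])
    show "\<And>y. y \<in> U \<Longrightarrow> frechet_derivative nd (at y) v = - frechet_derivative d (at y) v" by (rule nd_fd)
    show "(\<lambda>y. - frechet_derivative d (at y) v) differentiable (at z)" using dd1[OF z] by (rule differentiable_minus)
  qed
  have nd_fd2: "frechet_derivative (\<lambda>y. frechet_derivative nd (at y) v) (at z) u' =
      - frechet_derivative (\<lambda>y. frechet_derivative d (at y) v) (at z) u'" if z: "z \<in> U" for z v u'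
  proof -
    have "frechet_derivative (\<lambda>y. frechet_derivative nd (at y) v) (at z) =
        frechet_derivative (\<lambda>y. - frechet_derivative d (at y) v) (at z)"
      by (rule fd_local[OF Uo z]) (rule nd_fd)
    then show ?thesis using fd_uminus[OF dd1[OF z]] by simp
  qed
  have ndle: "nd (x, t) \<le> 0" if "x \<in> closure \<Omega>" "t \<ge> t0" for x t
  proof (rule heat_max[OF op cpt U nd_d nd_d1 _ _ _ _ nu, of x t])
    show "continuous_on U nd" unfolding nd_def[abs_def] by (intro continuous_intros cd)
    show "\<And>x t. x \<in> frontier \<Omega> \<Longrightarrow> t0 \<le> t \<Longrightarrow> nd (x, t) \<le> 0" using bnd0 unfolding nd_def by simp
    show "\<And>x. x \<in> closure \<Omega> \<Longrightarrow> nd (x, t0) \<le> 0" using ini0 unfolding nd_def by simp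
    show "\<And>x t. x \<in> \<Omega> \<Longrightarrow> t0 < t \<Longrightarrow> frechet_derivative nd (at (x, t)) (0, 1) =
        \<nu> * (\<Sum>c\<in>Basis. frechet_derivative (\<lambda>y. frechet_derivative nd (at y) (c, 0)) (at (x, t)) (c, 0))"
    proof -
      fix x t assume xt: "x \<in> \<Omega>" "t0 < t"
      have z: "(x, t) \<in> U" using \<Omega>U xt by simp
      show "frechet_derivative nd (at (x, t)) (0, 1) =
        \<nu> * (\<Sum>c\<in>Basis. frechet_derivative (\<lambda>y. frechet_derivative nd (at y) (c, 0)) (at (x, t)) (c, 0))"
        using pde[of x t] xt nd_fd[OF z] nd_fd2[OF z] by (simp add: sum_negf)
    qed
  qed (use that in auto)
  have d0: "d (x, t) = 0" if "x \<in> closure \<Omega>" "t \<ge> t0" for x t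
    using dle[OF that] ndle[OF that] unfolding nd_def by simp
  have dvw0: "dvg (\<lambda>y. w y t) x = 0" if "x \<in> closure \<Omega>" "t \<ge> t0" for x t
    using d0[OF that] d_dvg[OF inU[OF that]] by simp
  have evol_cl: "tderiv w x t = g x t - advect (\<lambda>y. u y t) (\<lambda>y. u y t) x - grad (\<lambda>y. q y t) x + \<nu> *\<^sub>R lap (\<lambda>y. w y t) x"
    if x: "x \<in> closure \<Omega>" and t: "t \<ge> t0" for x t
  proof -
    define S where "S = {y. (y, t) \<in> U}"
    define LH where "LH y = dds [(0, 1)] Wj (y, t)" for y
    define RH where "RH y = Gj (y, t) - (\<Sum>c\<in>Basis. (Uj (y, t) \<bullet> c) *\<^sub>R dds [(c, 0)] Uj (y, t))
        - (\<Sum>c\<in>Basis. dds [(c, 0)] Qj (y, t) *\<^sub>R c) + \<nu> *\<^sub>R (\<Sum>c\<in>Basis. dds [(c, 0), (c, 0)] Wj (y, t))" for y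
    have eL: "tderiv w y t = LH y" if "y \<in> S" for y
      unfolding LH_def wts using tderiv_slice[OF smW Uo] that unfolding S_def by simp
    have eR: "g y t - advect (\<lambda>y. u y t) (\<lambda>y. u y t) y - grad (\<lambda>y. q y t) y + \<nu> *\<^sub>R lap (\<lambda>y. w y t) y = RH y"
      if "y \<in> S" for y
    proof -
      have yU: "(y, t) \<in> U" using that unfolding S_def by simp
      show ?thesis unfolding RH_def gsl usl qsl wsl
        using adv_slice[OF smU Uo yU] grad_slice[OF smQ Uo yU] lap_slice[OF smW Uo yU]
        by (simp add: Gj_def Uj_def)
    qed
    have cG0: "continuous_on S (\<lambda>y. Gj (y, t))" using cont_slice[OF smG, of t "[]"] unfolding S_def by simp
    have cU0: "continuous_on S (\<lambda>y. Uj (y, t))" using cont_slice[OF smU, of t "[]"] unfolding S_def by simp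
    have cL: "continuous_on S LH" unfolding LH_def S_def by (rule cont_slice[OF smW])
    have cR: "continuous_on S RH" unfolding RH_def
      by (intro continuous_intros cG0 cU0 cont_slice[OF smU, of t, folded S_def]
          cont_slice[OF smQ, of t, folded S_def] cont_slice[OF smW, of t, folded S_def])
    have "LH x = RH x"
    proof (rule closure_eq[OF _ _ cL cR _ x])
      show "open S" unfolding S_def by (rule SLo)
      show "closure \<Omega> \<subseteq> S" unfolding S_def by (rule SLc[OF t])
      fix y assume y: "y \<in> \<Omega>"
      have yS: "y \<in> S" using \<Omega>U[OF y t] unfolding S_def by simp
      show "LH y = RH y" using evol t y eL[OF yS] eR[OF yS] by simp
    qed
    moreover have xS: "x \<in> S" using inU[OF x t] unfolding S_def by simp
    ultimately show ?thesis using eL[OF xS] eR[OF xS] by simp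
  qed
  have nw0: "n x \<bullet> w x t = 0" if x: "x \<in> frontier \<Omega>" and t: "t \<ge> t0" for x t
  proof -
    have xc: "x \<in> closure \<Omega>" using x fr_cl by auto
    define f where "f s = n x \<bullet> w x s" for s
    have df: "DERIV f s :> - lam * f s" if s: "s \<ge> t0" for s
    proof -
      have xs: "(x, s) \<in> U" by (rule inU[OF xc s])
      have vd: "((\<lambda>s. w x s) has_vector_derivative tderiv w x s) (at s)"
      proof -
        have "((\<lambda>s. Wj (x, s)) has_vector_derivative frechet_derivative Wj (at (x, s)) (0, 1)) (at s)"
          using tslice[OF smooth_diff[OF smW Uo xs, of "[]"]] by simp
        moreover have "tderiv w x s = frechet_derivative Wj (at (x, s)) (0, 1)"
          unfolding wts using tderiv_slice[OF smW Uo xs] by simp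
        ultimately show ?thesis by (simp add: Wj_def)
      qed
      have hd: "((\<lambda>s. n x \<bullet> w x s) has_derivative (\<lambda>r. n x \<bullet> (r *\<^sub>R tderiv w x s))) (at s)"
        using vd unfolding has_vector_derivative_def by (rule has_derivative_inner_right)
      have eq: "(\<lambda>r. n x \<bullet> (r *\<^sub>R tderiv w x s)) = (*) (n x \<bullet> tderiv w x s)"
        by (rule ext) (simp add: mult.commute)
      have "DERIV f s :> n x \<bullet> tderiv w x s"
        unfolding f_def has_field_derivative_def using hd unfolding eq .
      moreover have "n x \<bullet> tderiv w x s = - lam * f s"
      proof -
        have e1: "tderiv w x s = g x s - advect (\<lambda>y. u y s) (\<lambda>y. u y s) x - grad (\<lambda>y. q y s) x + \<nu> *\<^sub>R lap (\<lambda>y. w y s) x"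
          by (rule evol_cl[OF xc s])
        have e2: "n x \<bullet> grad (\<lambda>y. q y s) x =
            n x \<bullet> (g x s - advect (\<lambda>y. u y s) (\<lambda>y. u y s) x + \<nu> *\<^sub>R lap (\<lambda>y. w y s) x) + lam * (n x \<bullet> w x s)"
          using q_bc s x by blast
        show ?thesis unfolding e1 f_def using e2 by (simp add: inner_diff_right inner_add_right)
      qed
      ultimately show ?thesis by simp
    qed
    define h where "h s = exp (lam * s) * f s" for s
    have dh: "(h has_field_derivative 0) (at s within {t0..})" if "s \<in> {t0..}" for s
    proof -
      have "DERIV h s :> exp (lam * s) * lam * f s + exp (lam * s) * (- lam * f s)"
        unfolding h_def using df[of s] that
        by (auto intro!: derivative_eq_intros simp: algebra_simps)
      then have "DERIV h s :> 0" by (simp add: algebra_simps)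
      then show ?thesis by (rule has_field_derivative_at_within)
    qed
    obtain c where c: "\<And>s. s \<in> {t0..} \<Longrightarrow> h s = c"
      using has_field_derivative_zero_constant[OF convex_real_interval(1) dh] by blast
    have "f t0 = 0"
    proof -
      have "w x t0 = u x t0" using init xc by blast
      then show ?thesis unfolding f_def using u_bc x by (simp add: inner_commute)
    qed
    then have "h t = 0" using c[of t] c[of t0] t unfolding h_def by simp
    then show ?thesis unfolding h_def f_def by simp
  qed
  have wu: "w x t = u x t" if x: "x \<in> closure \<Omega>" and t: "t \<ge> t0" for x t
  proof -
    obtain \<phi> :: "'a \<Rightarrow> real" and V where V: "open V" "closure \<Omega> \<subseteq> V" "Ck_on 2 V \<phi>"
      and l\<phi>: "\<forall>x\<in>\<Omega>. lap \<phi> x = dvg (\<lambda>y. w y t) x"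
      and n\<phi>: "\<forall>x\<in>frontier \<Omega>. n x \<bullet> grad \<phi> x = n x \<bullet> w x t"
      and ue: "\<forall>x\<in>\<Omega>. u x t = w x t - grad \<phi> x"
      using proj_obt[OF t] by blast
    have lap0: "lap \<phi> y = 0" if "y \<in> \<Omega>" for y
    proof -
      have "y \<in> closure \<Omega>" using that closure_subset by blast
      then have "dvg (\<lambda>y. w y t) y = 0" using dvw0[OF _ t] by blast
      then show ?thesis using l\<phi> that by simp
    qed
    have neu: "frechet_derivative \<phi> (at y) (grad \<rho> y) = 0" if y: "y \<in> frontier \<Omega>" for y
    proof -
      have yV: "y \<in> V" using y fr_cl V(2) by auto
      have "frechet_derivative \<phi> (at y) (grad \<rho> y) = grad \<phi> y \<bullet> grad \<rho> y"
        by (rule grad_inner[OF C2_d0[OF V(3) V(1) yV]])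
      moreover have gne: "grad \<rho> y \<noteq> 0"
        using dom dom_frontier[OF dom y] unfolding smooth_domain_def by blast
      moreover have n0: "n y \<bullet> grad \<phi> y = 0" using n\<phi> nw0[OF y t] y by simp
      moreover have ny: "n y = (1 / norm (grad \<rho> y)) *\<^sub>R grad \<rho> y"
        using normal y unfolding outward_normal_def by blast
      ultimately have "(1 / norm (grad \<rho> y)) * (grad \<rho> y \<bullet> grad \<phi> y) = 0" by simp
      then have "grad \<rho> y \<bullet> grad \<phi> y = 0" using gne by simp
      then show ?thesis using \<open>frechet_derivative \<phi> (at y) (grad \<rho> y) = grad \<phi> y \<bullet> grad \<rho> y\<close>
        by (simp only: inner_commute)
    qed
    have g0: "grad \<phi> y = 0" if "y \<in> \<Omega>" for y
      by (rule neumann_const[OF dom V lap0 neu that])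
    have cw: "continuous_on {y. (y, t) \<in> U} (\<lambda>y. w y t)"
      unfolding wsl using cont_slice[OF smW, of t "[]"] by simp
    have cu: "continuous_on {y. (y, t) \<in> U} (\<lambda>y. u y t)"
      unfolding usl using cont_slice[OF smU, of t "[]"] by simp
    show ?thesis
      by (rule closure_eq[OF SLo SLc[OF t] cw cu _ x]) (use ue g0 in auto)
  qed
  show ?thesis
  proof (intro conjI allI impI ballI)
    fix t x assume t: "t0 \<le> t" and x: "x \<in> closure \<Omega>"
    show "w x t = u x t" by (rule wu[OF x t])
  next
    fix t x assume t: "t0 \<le> t" and x: "x \<in> \<Omega>"
    have xs: "(x, t) \<in> U" by (rule \<Omega>U[OF x t])
    have vdw: "((\<lambda>s. w x s) has_vector_derivative tderiv w x t) (at t)"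
    proof -
      have "((\<lambda>s. Wj (x, s)) has_vector_derivative frechet_derivative Wj (at (x, t)) (0, 1)) (at t)"
        using tslice[OF smooth_diff[OF smW Uo xs, of "[]"]] by simp
      moreover have "tderiv w x t = frechet_derivative Wj (at (x, t)) (0, 1)"
        unfolding wts using tderiv_slice[OF smW Uo xs] by simp
      ultimately show ?thesis by (simp add: Wj_def)
    qed
    have vdu: "((\<lambda>s. u x s) has_vector_derivative tderiv u x t) (at t)"
    proof -
      have "((\<lambda>s. Uj (x, s)) has_vector_derivative frechet_derivative Uj (at (x, t)) (0, 1)) (at t)"
        using tslice[OF smooth_diff[OF smU Uo xs, of "[]"]] by simp
      moreover have "tderiv u x t = frechet_derivative Uj (at (x, t)) (0, 1)"
        unfolding uts using tderiv_slice[OF smU Uo xs] by simp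
      ultimately show ?thesis by (simp add: Uj_def)
    qed
    have xc: "x \<in> closure \<Omega>" using x closure_subset by blast
    have "((\<lambda>s. u x s) has_vector_derivative tderiv w x t) (at t within {t0..})"
    proof (rule has_vector_derivative_transform[of t "{t0..}" "\<lambda>s. u x s" "\<lambda>s. w x s"])
      show "t \<in> {t0..}" using t by simp
      show "\<And>s. s \<in> {t0..} \<Longrightarrow> u x s = w x s" using wu[OF xc] by simp
      show "((\<lambda>s. w x s) has_vector_derivative tderiv w x t) (at t within {t0..})"
        by (rule has_vector_derivative_at_within[OF vdw])
    qed
    moreover have "((\<lambda>s. u x s) has_vector_derivative tderiv u x t) (at t within {t0..})"
      by (rule has_vector_derivative_at_within[OF vdu])
    ultimately have tu: "tderiv u x t = tderiv w x t"
      by (intro vector_derivative_unique_within[OF not_bot_Ici[OF t]])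
    have lu: "lap (\<lambda>y. u y t) x = lap (\<lambda>y. w y t) x"
    proof (rule lap_local[OF op x])
      fix y assume y: "y \<in> \<Omega>"
      have "y \<in> closure \<Omega>" using y closure_subset by blast
      then show "u y t = w y t" using wu[OF _ t] by simp
    qed
    have ev: "tderiv w x t = g x t - advect (\<lambda>y. u y t) (\<lambda>y. u y t) x - grad (\<lambda>y. q y t) x + \<nu> *\<^sub>R lap (\<lambda>y. w y t) x"
      using evol t x by blast
    show "tderiv u x t + advect (\<lambda>y. u y t) (\<lambda>y. u y t) x =
        g x t - grad (\<lambda>y. q y t) x + \<nu> *\<^sub>R lap (\<lambda>y. u y t) x"
      unfolding tu lu ev by (simp add: algebra_simps)
    show "dvg (\<lambda>y. u y t) x = 0" by (rule dvu[OF t x])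
  next
    fix t x assume t: "t0 \<le> t" and x: "x \<in> frontier \<Omega>"
    have xc: "x \<in> closure \<Omega>" using x fr_cl by auto
    have "w x t \<bullet> n x = 0" using nw0[OF x t] by (simp add: inner_commute)
    moreover have "\<forall>\<tau>. \<tau> \<bullet> n x = 0 \<longrightarrow> w x t \<bullet> \<tau> = 0" using w_bc t x by blast
    ultimately have "w x t \<bullet> w x t = 0" by blast
    then show "u x t = 0" using wu[OF xc t] by simp
  qed
qed


end
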